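(* Let $\lambda=0$ and $u_0$ smooth and $1$-periodic, and consider $u_{xt}+uu_{xx}=-\int_0^1u_x^2\,dx$, $u(x,0)=u_0$, with periodic boundary conditions. Then along characteristics, for all $t\ge0$, $$\gamma_\alpha(\alpha,t)=\frac{e^{tu_0'(\alpha)}}{\int_0^1e^{tu_0'(\beta)}d\beta},\qquad u_x(\gamma(\alpha,t),t)=u_0'(\alpha)-\frac{\int_0^1u_0'(\beta)e^{tu_0'(\beta)}d\beta}{\int_0^1e^{tu_0'(\beta)}d\beta},$$ and $0\le u_0'(\alpha)-u_x(\gamma(\alpha,t),t)\le\int_0^1u_0'(\beta)e^{tu_0'(\beta)}d\beta$; in particular the solution exists globally in time.
   Context: $\gamma$ is the characteristic: $\dot\gamma(\alpha,t)=u(\gamma(\alpha,t),t)$, $\gamma(\alpha,0)=\alpha$, and $\gamma_\alpha=\partial_\alpha\gamma$. *)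

theory Defs
  imports "HOL-Analysis.Analysis"
begin

definition pdx :: "(real \<Rightarrow> real \<Rightarrow> real) \<Rightarrow> real \<Rightarrow> real \<Rightarrow> real" where
  "pdx f x t = deriv (\<lambda>y. f y t) x"

definition pdt :: "real \<Rightarrow> (real \<Rightarrow> real \<Rightarrow> real) \<Rightarrow> real \<Rightarrow> real \<Rightarrow> real" where
  "pdt T f x t = vector_derivative (\<lambda>s. f x s) (at t within {0..<T})"

text \<open>Iterated partial derivative: True = d/dx, False = d/dt; the head is applied last.\<close>
fun pd :: "real \<Rightarrow> bool list \<Rightarrow> (real \<Rightarrow> real \<Rightarrow> real) \<Rightarrow> real \<Rightarrow> real \<Rightarrow> real" where
  "pd T [] f = f"
| "pd T (True # ds) f = pdx (pd T ds f)"
| "pd T (False # ds) f = pdt T (pd T ds f)"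

definition smooth_on_strip :: "real \<Rightarrow> (real \<Rightarrow> real \<Rightarrow> real) \<Rightarrow> bool" where
  "smooth_on_strip T u \<longleftrightarrow>
     (\<forall>ds. (\<forall>x t. 0 \<le> t \<and> t < T \<longrightarrow>
              (\<lambda>y. pd T ds u y t) differentiable (at x) \<and>
              (\<lambda>s. pd T ds u x s) differentiable (at t within {0..<T})) \<and>
           continuous_on (UNIV \<times> {0..<T}) (\<lambda>p. pd T ds u (fst p) (snd p)))"

definition smooth1 :: "(real \<Rightarrow> real) \<Rightarrow> bool" where
  "smooth1 f \<longleftrightarrow> (\<forall>n x. ((deriv ^^ n) f) differentiable (at x))"

definition is_solution :: "(real \<Rightarrow> real) \<Rightarrow> real \<Rightarrow> (real \<Rightarrow> real \<Rightarrow> real) \<Rightarrow> bool" where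
  "is_solution u0 T u \<longleftrightarrow>
     smooth_on_strip T u \<and>
     (\<forall>x. u x 0 = u0 x) \<and>
     (\<forall>x t. 0 \<le> t \<and> t < T \<longrightarrow> u (x + 1) t = u x t) \<and>
     (\<forall>x t. 0 \<le> t \<and> t < T \<longrightarrow>
        pd T [False, True] u x t + u x t * pd T [True, True] u x t
          = - integral {0..1} (\<lambda>y. (pd T [True] u y t)\<^sup>2))"

definition is_characteristic :: "real \<Rightarrow> (real \<Rightarrow> real \<Rightarrow> real) \<Rightarrow> (real \<Rightarrow> real \<Rightarrow> real) \<Rightarrow> bool" where
  "is_characteristic T u \<gamma> \<longleftrightarrow>
     (\<forall>a. \<gamma> a 0 = a) \<and>
     (\<forall>a t. 0 \<le> t \<and> t < T \<longrightarrow>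
        ((\<lambda>s. \<gamma> a s) has_real_derivative u (\<gamma> a t) t) (at t within {0..<T}))"

end

theory Submission
  imports Defs
begin


lemma mvt_abs:
  fixes f f' :: "real \<Rightarrow> real"
  assumes d: "\<And>y. (f has_real_derivative f' y) (at y)"
  shows "\<exists>\<xi>. \<bar>\<xi> - a\<bar> \<le> \<bar>b - a\<bar> \<and> f b - f a = (b - a) * f' \<xi>"
proof (cases a b rule: linorder_cases)
  case less
  from MVT2[OF less, of f f'] d obtain z where "a < z" "z < b" "f b - f a = (b - a) * f' z" by blast
  then show ?thesis by (intro exI[of _ z]) auto
next
  case equal then show ?thesis by auto
next
  case greater
  from MVT2[OF greater, of f f'] d obtain z where "b < z" "z < a" "f a - f b = (a - b) * f' z" by blast
  then show ?thesis by (intro exI[of _ z]) (auto simp: algebra_simps)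
qed

lemma joint_deriv:
  fixes f fx :: "real \<Rightarrow> real \<Rightarrow> real"
  assumes dx: "\<And>y s. s \<in> S \<Longrightarrow> ((\<lambda>y. f y s) has_real_derivative fx y s) (at y)"
    and cont: "continuous_on (UNIV \<times> S) (\<lambda>p. fx (fst p) (snd p))"
    and dt: "((\<lambda>s. f x s) has_real_derivative ft) (at t within S)"
    and t: "t \<in> S"
  shows "((\<lambda>p. f (fst p) (snd p)) has_derivative (\<lambda>p. fx x t * fst p + ft * snd p)) (at (x,t) within UNIV \<times> S)"
  unfolding has_derivative_within_alt
proof (intro conjI allI impI)
  show "bounded_linear (\<lambda>p. fx x t * fst p + ft * snd p)"
    by (intro bounded_linear_intros)
  fix e :: real assume e: "e > 0"
  have "continuous (at (x,t) within UNIV \<times> S) (\<lambda>p. fx (fst p) (snd p))"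
    using cont t by (simp add: continuous_on_eq_continuous_within)
  then obtain d1 where d1: "d1 > 0" and
    hd1: "\<And>p. p \<in> UNIV \<times> S \<Longrightarrow> dist p (x,t) < d1 \<Longrightarrow> dist (fx (fst p) (snd p)) (fx x t) < e/2"
    unfolding continuous_within_eps_delta using e
    by (metis fst_conv snd_conv half_gt_zero)
  from dt have "((\<lambda>s. f x s) has_derivative (\<lambda>h. h * ft)) (at t within S)"
    unfolding has_field_derivative_def by (rule has_derivative_eq_rhs) (auto simp: fun_eq_iff)
  then obtain d2 where d2: "d2 > 0" and
    hd2: "\<And>s. s \<in> S \<Longrightarrow> norm (s - t) < d2 \<Longrightarrow> norm (f x s - f x t - (s - t) * ft) \<le> e/2 * norm (s - t)"
    unfolding has_derivative_within_alt using e by (metis half_gt_zero)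
  show "\<exists>d>0. \<forall>y\<in>UNIV \<times> S. norm (y - (x, t)) < d \<longrightarrow>
          norm (f (fst y) (snd y) - f (fst (x, t)) (snd (x, t)) -
                (fx x t * fst (y - (x, t)) + ft * snd (y - (x, t))))
          \<le> e * norm (y - (x, t))"
  proof (intro exI[of _ "min d1 d2"] conjI ballI impI)
    show "min d1 d2 > 0" using d1 d2 by simp
    fix p assume p: "p \<in> UNIV \<times> S" and np: "norm (p - (x,t)) < min d1 d2"
    obtain y s where ps: "p = (y,s)" by (cases p)
    have sS: "s \<in> S" using p ps by auto
    have ny: "\<bar>y - x\<bar> \<le> norm (p - (x,t))" using norm_fst_le[of "y - x" "s - t"] ps by simp
    have ns: "\<bar>s - t\<bar> \<le> norm (p - (x,t))" using norm_snd_le[of "s - t" "y - x"] ps by simp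
    obtain \<xi> where xi: "\<bar>\<xi> - x\<bar> \<le> \<bar>y - x\<bar>" and eq: "f y s - f x s = (y - x) * fx \<xi> s"
      using mvt_abs[of "\<lambda>y. f y s" "\<lambda>y. fx y s" x y] dx[OF sS] by blast
    have "dist (\<xi>, s) (x, t) \<le> dist (y, s) (x, t)"
      using xi by (simp add: dist_Pair_Pair dist_real_def) (metis abs_le_square_iff)
    also have "\<dots> = norm (p - (x,t))" using ps by (simp add: dist_norm)
    finally have "dist (\<xi>, s) (x,t) < d1" using np by simp
    then have c1: "\<bar>fx \<xi> s - fx x t\<bar> < e/2" using hd1[of "(\<xi>,s)"] sS by (simp add: dist_real_def)
    have c2: "\<bar>f x s - f x t - (s - t) * ft\<bar> \<le> e/2 * \<bar>s - t\<bar>"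
      using hd2[OF sS] np ns by simp
    have "f (fst p) (snd p) - f x t - (fx x t * fst (p - (x, t)) + ft * snd (p - (x, t)))
        = (fx \<xi> s - fx x t) * (y - x) + (f x s - f x t - (s - t) * ft)"
      using ps eq by (simp add: algebra_simps)
    also have "\<bar>\<dots>\<bar> \<le> \<bar>fx \<xi> s - fx x t\<bar> * \<bar>y - x\<bar> + e/2 * \<bar>s - t\<bar>"
      using abs_triangle_ineq[of "(fx \<xi> s - fx x t) * (y - x)" "f x s - f x t - (s - t) * ft"] c2
      by (simp add: abs_mult)
    also have "\<dots> \<le> e/2 * \<bar>y - x\<bar> + e/2 * \<bar>s - t\<bar>"
      using c1 by (intro add_right_mono mult_right_mono) auto
    also have "\<dots> \<le> e * norm (p - (x,t))"
    proof -
      have "e/2 * \<bar>y - x\<bar> \<le> e/2 * norm (p - (x,t))" using ny e by (intro mult_left_mono) auto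
      moreover have "e/2 * \<bar>s - t\<bar> \<le> e/2 * norm (p - (x,t))" using ns e by (intro mult_left_mono) auto
      ultimately show ?thesis by linarith
    qed
    finally show "norm (f (fst p) (snd p) - f (fst (x, t)) (snd (x, t)) -
                (fx x t * fst (p - (x, t)) + ft * snd (p - (x, t))))
          \<le> e * norm (p - (x, t))" by simp
  qed
qed


lemma deriv_nonpos_mono:
  fixes z z' :: "real \<Rightarrow> real"
  assumes d: "\<And>s. s \<in> {a..b} \<Longrightarrow> (z has_real_derivative z' s) (at s within {a..b})"
    and n: "\<And>s. s \<in> {a..b} \<Longrightarrow> z' s \<le> 0"
    and t: "a \<le> t" "t \<le> b"
  shows "z t \<le> z a"
proof (cases "a = t")
  case True then show ?thesis by simp
next
  case False
  then have at: "a < t" using t by simp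
  have "continuous_on {a..b} z"
    using d by (meson DERIV_continuous continuous_on_eq_continuous_within)
  then have c: "continuous_on {a..t} z" by (rule continuous_on_subset) (use t in auto)
  have dd: "(z has_real_derivative z' x) (at x)" if "a < x" "x < t" for x
  proof -
    have "x \<in> interior {a..b}" using that t by auto
    then have "at x within {a..b} = at x" by (rule at_within_interior)
    then show ?thesis using d[of x] that t by auto
  qed
  from MVT[OF at c] dd obtain l \<xi> where xi: "a < \<xi>" "\<xi> < t" "DERIV z \<xi> :> l" "z t - z a = (t - a) * l"
    by (meson real_differentiable_def)
  have "l = z' \<xi>" using DERIV_unique[OF xi(3) dd[OF xi(1,2)]] .
  then have "l \<le> 0" using n[of \<xi>] xi t by auto
  then show ?thesis using xi(4) at mult_nonneg_nonpos[of "t - a" l] by simp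
qed

lemma gronwall_sq:
  fixes e e' :: "real \<Rightarrow> real"
  assumes t: "t \<in> {0..t1}" and M: "0 \<le> M" and c: "0 \<le> c"
    and d: "\<And>s. s \<in> {0..t1} \<Longrightarrow> (e has_real_derivative e' s) (at s within {0..t1})"
    and b: "\<And>s. s \<in> {0..t1} \<Longrightarrow> \<bar>e' s\<bar> \<le> M * \<bar>e s\<bar> + c"
  shows "(e t)^2 \<le> ((e 0)^2 + c^2) * exp ((2*M+1) * t)"
proof -
  define L where "L = 2*M+1"
  define z where "z s = ((e s)^2 + c^2) * exp (-(L * s))" for s
  define z' where "z' s = (2 * e s * e' s) * exp (-(L * s)) + ((e s)^2 + c^2) * (exp (-(L * s)) * (- L))" for s
  have dz: "(z has_real_derivative z' s) (at s within {0..t1})" if "s \<in> {0..t1}" for s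
    unfolding z_def z'_def
    by (auto intro!: derivative_eq_intros d[OF that])
  have nz: "z' s \<le> 0" if "s \<in> {0..t1}" for s
  proof -
    have "2 * e s * e' s \<le> 2 * \<bar>e s\<bar> * \<bar>e' s\<bar>" by (simp add: abs_mult[symmetric])
    also have "\<dots> \<le> 2 * \<bar>e s\<bar> * (M * \<bar>e s\<bar> + c)" using b[OF that] by (intro mult_left_mono) auto
    also have "\<dots> \<le> L * ((e s)^2 + c^2)"
    proof -
      have a1: "2 * \<bar>e s\<bar> * c \<le> (e s)^2 + c^2" using sum_squares_bound[of "\<bar>e s\<bar>" c]
        by (simp add: power2_abs)
      have h1: "2 * \<bar>e s\<bar> * (M * \<bar>e s\<bar> + c) = 2 * M * (e s)^2 + 2 * \<bar>e s\<bar> * c"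
        by (simp add: algebra_simps power2_eq_square)
      have h3: "L * ((e s)^2 + c^2) = 2 * M * (e s)^2 + (e s)^2 + 2 * M * c^2 + c^2"
        by (simp add: L_def algebra_simps)
      have "0 \<le> 2 * M * c^2" using M by simp
      then show ?thesis using a1 h1 h3 by linarith
    qed
    finally have "2 * e s * e' s - L * ((e s)^2 + c^2) \<le> 0" by simp
    then have "(2 * e s * e' s - L * ((e s)^2 + c^2)) * exp (-(L * s)) \<le> 0"
      by (simp add: mult_nonpos_nonneg)
    then show ?thesis unfolding z'_def by (simp add: algebra_simps)
  qed
  have "z t \<le> z 0" using deriv_nonpos_mono[of 0 t1 z z' t] dz nz t by auto
  then have "((e t)^2 + c^2) * exp (-(L * t)) \<le> (e 0)^2 + c^2" by (simp add: z_def)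
  then have "((e t)^2 + c^2) \<le> ((e 0)^2 + c^2) * exp (L * t)"
    by (simp add: exp_minus field_simps)
  then show ?thesis unfolding L_def using zero_le_power2[of c] by linarith
qed

lemma periodic_int:
  fixes g :: "real \<Rightarrow> 'a"
  assumes per: "\<And>x. g (x+1) = g x"
  shows "g (x + of_int n) = g x"
proof -
  have p: "g (y + real k) = g y" for y k
  proof (induction k)
    case 0 then show ?case by simp
  next
    case (Suc k)
    have eq: "y + real (Suc k) = (y + real k) + 1" by simp
    show ?case using Suc per[of "y + real k"] by (simp only: eq)
  qed
  show ?thesis
  proof (cases "n \<ge> 0")
    case True then show ?thesis using p[of x "nat n"] by simp
  next
    case False
    have "g (x + of_int n + real (nat (-n))) = g (x + of_int n)" by (rule p)
    then show ?thesis using False by simp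
  qed
qed

lemma periodic_red:
  fixes g :: "real \<Rightarrow> real \<Rightarrow> real"
  assumes per: "\<And>x. g (x+1) s = g x s"
  shows "g (x + of_int n) s = g x s"
  using periodic_int[of "\<lambda>x. g x s", OF per] .

lemma periodic_bound:
  fixes g :: "real \<Rightarrow> real \<Rightarrow> real" and t1 :: real
  assumes cont: "continuous_on (UNIV \<times> {0..t1}) (\<lambda>p. g (fst p) (snd p))"
    and per: "\<And>x s. s \<in> {0..t1} \<Longrightarrow> g (x+1) s = g x s"
  shows "\<exists>B. \<forall>x. \<forall>s\<in>{0..t1}. \<bar>g x s\<bar> \<le> B"
proof -
  have red: "g x s = g (x - of_int \<lfloor>x\<rfloor>) s" if "s \<in> {0..t1}" for x s
  proof -
    have "g (x - of_int \<lfloor>x\<rfloor> + of_int \<lfloor>x\<rfloor>) s = g (x - of_int \<lfloor>x\<rfloor>) s"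
      by (rule periodic_red[of g s, OF per[OF that]])
    then show ?thesis by simp
  qed
  have "compact ({0..1} \<times> {0..t1} :: (real \<times> real) set)" by (intro compact_Times compact_Icc)
  moreover have "continuous_on ({0..1} \<times> {0..t1}) (\<lambda>p. g (fst p) (snd p))"
    by (rule continuous_on_subset[OF cont]) auto
  ultimately have "compact ((\<lambda>p. g (fst p) (snd p)) ` ({0..1} \<times> {0..t1}))"
    by (rule compact_continuous_image[rotated])
  then obtain B where B: "\<And>p. p \<in> {0..1} \<times> {0..t1} \<Longrightarrow> \<bar>g (fst p) (snd p)\<bar> \<le> B"
    by (metis (no_types, lifting) bounded_iff compact_imp_bounded image_eqI real_norm_def)
  show "\<exists>B. \<forall>x. \<forall>s\<in>{0..t1}. \<bar>g x s\<bar> \<le> B"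
  proof (intro exI allI ballI)
    fix x :: real and s assume s: "s \<in> {0..t1}"
    have "x - of_int \<lfloor>x\<rfloor> \<in> {0..1}" using frac_lt_1[of x] of_int_floor_le[of x] unfolding frac_def atLeastAtMost_iff by linarith
    then show "\<bar>g x s\<bar> \<le> B" using B[of "(x - of_int \<lfloor>x\<rfloor>, s)"] s red[OF s, of x] by auto
  qed
qed

lemma periodic_unif:
  fixes g :: "real \<Rightarrow> real \<Rightarrow> real" and t1 e :: real
  assumes cont: "continuous_on (UNIV \<times> {0..t1}) (\<lambda>p. g (fst p) (snd p))"
    and per: "\<And>x s. s \<in> {0..t1} \<Longrightarrow> g (x+1) s = g x s"
    and e: "e > 0"
  shows "\<exists>d>0. \<forall>x y s s'. s \<in> {0..t1} \<longrightarrow> s' \<in> {0..t1} \<longrightarrow>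
             \<bar>x - y\<bar> < d \<longrightarrow> \<bar>s - s'\<bar> < d \<longrightarrow> \<bar>g x s - g y s'\<bar> < e"
proof -
  have red: "g x s = g (x - of_int \<lfloor>x\<rfloor>) s" if "s \<in> {0..t1}" for x s
  proof -
    have "g (x - of_int \<lfloor>x\<rfloor> + of_int \<lfloor>x\<rfloor>) s = g (x - of_int \<lfloor>x\<rfloor>) s"
      by (rule periodic_red[of g s, OF per[OF that]])
    then show ?thesis by simp
  qed
  have K: "compact ({-1..2} \<times> {0..t1} :: (real \<times> real) set)" by (intro compact_Times compact_Icc)
  have "continuous_on ({-1..2} \<times> {0..t1}) (\<lambda>p. g (fst p) (snd p))"
    by (rule continuous_on_subset[OF cont]) auto
  then have "uniformly_continuous_on ({-1..2} \<times> {0..t1}) (\<lambda>p. g (fst p) (snd p))"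
    using K compact_uniformly_continuous by blast
  then obtain d where d: "d > 0" and hd: "\<And>p q. p \<in> {-1..2} \<times> {0..t1} \<Longrightarrow> q \<in> {-1..2} \<times> {0..t1} \<Longrightarrow>
      dist q p < d \<Longrightarrow> dist (g (fst q) (snd q)) (g (fst p) (snd p)) < e"
    unfolding uniformly_continuous_on_def using e by metis
  show "\<exists>d>0. \<forall>x y s s'. s \<in> {0..t1} \<longrightarrow> s' \<in> {0..t1} \<longrightarrow>
             \<bar>x - y\<bar> < d \<longrightarrow> \<bar>s - s'\<bar> < d \<longrightarrow> \<bar>g x s - g y s'\<bar> < e"
  proof (intro exI[of _ "min (d/2) (1/2)"] conjI allI impI)
    show "min (d/2) (1/2) > 0" using d by simp
    fix x y s s' assume s: "s \<in> {0..t1}" and s': "s' \<in> {0..t1}"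
      and xy: "\<bar>x - y\<bar> < min (d/2) (1/2)" and ss: "\<bar>s - s'\<bar> < min (d/2) (1/2)"
    define x0 where "x0 = x - of_int \<lfloor>x\<rfloor>"
    define y0 where "y0 = y - of_int \<lfloor>x\<rfloor>"
    have x01: "x0 \<in> {0..1}" unfolding x0_def using frac_lt_1[of x] of_int_floor_le[of x] unfolding frac_def atLeastAtMost_iff by linarith
    then have x0: "x0 \<in> {-1..2}" by auto
    have "\<bar>x - y\<bar> < 1/2" using xy by simp
    then have y0: "y0 \<in> {-1..2}" using x01 unfolding x0_def y0_def atLeastAtMost_iff abs_less_iff by linarith
    have gx: "g x s = g x0 s" unfolding x0_def using red[OF s] .
    have gy: "g y s' = g y0 s'"
      using periodic_red[of g s', OF per[OF s'], of "y - of_int \<lfloor>x\<rfloor>" "\<lfloor>x\<rfloor>"] unfolding y0_def by simp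
    have "dist (y0, s') (x0, s) = sqrt ((y - x)^2 + (s' - s)^2)"
      unfolding x0_def y0_def by (simp add: dist_Pair_Pair dist_real_def)
    also have "\<dots> < d"
    proof -
      have "\<bar>y - x\<bar>^2 < (d/2)^2" using xy d by (intro power_strict_mono) (auto simp: abs_minus_commute)
      moreover have "\<bar>s' - s\<bar>^2 < (d/2)^2" using ss d by (intro power_strict_mono) (auto simp: abs_minus_commute)
      ultimately have "(y - x)^2 + (s' - s)^2 < (d/2)^2 + (d/2)^2" by (simp add: power2_abs)
      also have "\<dots> \<le> d^2" by (simp add: power_divide)
      finally have "(y - x)^2 + (s' - s)^2 < d^2" .
      then have "sqrt ((y - x)^2 + (s' - s)^2) < sqrt (d^2)" by (rule real_sqrt_less_mono)
      then show ?thesis using d by simp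
    qed
    finally have "dist (g y0 s') (g x0 s) < e" using hd[of "(x0,s)" "(y0,s')"] x0 y0 s s' by auto
    then show "\<bar>g x s - g y s'\<bar> < e" using gx gy by (simp add: dist_real_def abs_minus_commute)
  qed
qed


lemma deriv_periodic:
  fixes f :: "real \<Rightarrow> real"
  assumes per: "\<And>y. f (y+1) = f y" and d: "f differentiable at (x+1)"
  shows "deriv f (x+1) = deriv f x"
proof -
  have "(f has_real_derivative deriv f (x+1)) (at (x+1))"
    using d DERIV_deriv_iff_real_differentiable by blast
  then have "((\<lambda>y. f (y+1)) has_real_derivative deriv f (x+1)) (at x)"
    using DERIV_shift by blast
  then have "(f has_real_derivative deriv f (x+1)) (at x)" using per by simp
  then show ?thesis by (simp add: DERIV_imp_deriv)
qed

definition Zf :: "(real \<Rightarrow> real) \<Rightarrow> nat \<Rightarrow> real \<Rightarrow> real" where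
  "Zf u0 k t = integral {0..1} (\<lambda>b. deriv u0 b ^ k * exp (t * deriv u0 b))"

lemma Zf0: "Zf u0 0 t = integral {0..1} (\<lambda>b. exp (t * deriv u0 b))"
  by (simp add: Zf_def)
lemma Zf1: "Zf u0 1 t = integral {0..1} (\<lambda>b. deriv u0 b * exp (t * deriv u0 b))"
  by (simp add: Zf_def)

context
  fixes u0 :: "real \<Rightarrow> real"
  assumes sm: "smooth1 u0" and per0: "\<forall>x. u0 (x + 1) = u0 x"
begin

lemma Dk_deriv: "((deriv^^k) u0 has_real_derivative (deriv^^(Suc k)) u0 x) (at x)"
  using sm unfolding smooth1_def by (simp add: DERIV_deriv_iff_real_differentiable)

lemma Dk_cont: "continuous_on S ((deriv^^k) u0)"
  using Dk_deriv by (meson DERIV_isCont continuous_at_imp_continuous_on)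

lemma Dk_cont_intro [continuous_intros]:
  "continuous_on S f \<Longrightarrow> continuous_on S (\<lambda>x. (deriv^^k) u0 (f x))"
  by (rule continuous_on_compose2[OF Dk_cont[of UNIV]]) auto

lemma u0_deriv: "(u0 has_real_derivative deriv u0 x) (at x)"
  using Dk_deriv[of 0] by simp

lemma D1_deriv: "(deriv u0 has_real_derivative deriv (deriv u0) x) (at x)"
  using Dk_deriv[of 1] by simp

lemma D1_cont_intro [continuous_intros]:
  "continuous_on S f \<Longrightarrow> continuous_on S (\<lambda>x. deriv u0 (f x))"
  using Dk_cont_intro[of S f 1] by simp

lemma D2_cont_intro [continuous_intros]:
  "continuous_on S f \<Longrightarrow> continuous_on S (\<lambda>x. deriv (deriv u0) (f x))"
  using Dk_cont_intro[of S f 2] by (simp add: numeral_2_eq_2)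

lemma D1_per: "deriv u0 (x+1) = deriv u0 x"
  using deriv_periodic[of u0 x] per0 u0_deriv real_differentiable_def by blast

lemma u0_per_int: "u0 1 = u0 0" using per0 by (metis add_0)

lemma int_D1: "integral {0..1} (deriv u0) = 0"
proof -
  have "(deriv u0 has_integral u0 1 - u0 0) {0..1}"
    by (rule fundamental_theorem_of_calculus)
       (auto simp: has_real_derivative_iff_has_vector_derivative[symmetric]
             intro: has_field_derivative_at_within[OF u0_deriv])
  then show ?thesis using u0_per_int by (simp add: integral_unique)
qed

lemma Zf_deriv: "(Zf u0 k has_real_derivative Zf u0 (Suc k) t) (at t)"
proof -
  have "((\<lambda>x. integral (cbox 0 1) (\<lambda>b. deriv u0 b ^ k * exp (x * deriv u0 b))) has_field_derivative
        integral (cbox 0 1) (\<lambda>b. deriv u0 b ^ k * (exp (t * deriv u0 b) * deriv u0 b))) (at t within UNIV)"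
    by (rule leibniz_rule_field_derivative)
       (auto intro!: derivative_eq_intros integrable_continuous_interval continuous_intros
             simp: split_beta)
  then show ?thesis unfolding Zf_def by (simp add: mult_ac)
qed

lemma Zf_cont: "continuous_on S (Zf u0 k)"
  using Zf_deriv by (meson DERIV_isCont continuous_at_imp_continuous_on)

lemma Zf0_ge1: assumes "0 \<le> t" shows "1 \<le> Zf u0 0 t"
proof -
  have "integral {0..1} (\<lambda>b. 1 + t * deriv u0 b) \<le> integral {0..1} (\<lambda>b. exp (t * deriv u0 b))"
    by (rule integral_le) (auto intro!: integrable_continuous_interval continuous_intros)
  moreover have "integral {0..1} (\<lambda>b. 1 + t * deriv u0 b) = 1"
  proof -
    have "((\<lambda>b. 1 + t * deriv u0 b) has_integral ((1 + t * u0 1) - (0 + t * u0 0))) {0..1}"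
      by (rule fundamental_theorem_of_calculus)
         (auto simp: has_real_derivative_iff_has_vector_derivative[symmetric]
             intro!: derivative_eq_intros has_field_derivative_at_within[OF u0_deriv])
    then show ?thesis using u0_per_int by (simp add: integral_unique algebra_simps)
  qed
  ultimately show ?thesis by (simp add: Zf_def)
qed

lemma Zf0_pos: assumes "0 \<le> t" shows "0 < Zf u0 0 t"
  using Zf0_ge1[OF assms] by simp

lemma Zf1_ge0: assumes "0 \<le> t" shows "0 \<le> Zf u0 1 t"
proof -
  have "integral {0..1} (deriv u0) \<le> integral {0..1} (\<lambda>b. deriv u0 b * exp (t * deriv u0 b))"
  proof (rule integral_le)
    show "deriv u0 integrable_on {0..1}" by (auto intro!: integrable_continuous_interval continuous_intros Dk_cont[of _ 1, simplified])
    show "(\<lambda>b. deriv u0 b * exp (t * deriv u0 b)) integrable_on {0..1}"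
      by (auto intro!: integrable_continuous_interval continuous_intros)
    fix b
    show "deriv u0 b \<le> deriv u0 b * exp (t * deriv u0 b)"
    proof (cases "deriv u0 b \<ge> 0")
      case True
      then have "1 \<le> exp (t * deriv u0 b)" using assms by simp
      then show ?thesis using True by (metis mult.right_neutral mult_left_mono)
    next
      case False
      then have "exp (t * deriv u0 b) \<le> 1" using assms by (simp add: mult_nonneg_nonpos)
      then show ?thesis using False by (simp add: mult_le_cancel_left1)
    qed
  qed
  then show ?thesis using int_D1 by (simp add: Zf_def)
qed

lemma Zf1_0: "Zf u0 1 0 = 0"
  using int_D1 by (simp add: Zf_def)

end


definition Jf :: "real \<Rightarrow> (real\<Rightarrow>real) \<Rightarrow> (real\<Rightarrow>real\<Rightarrow>real) \<Rightarrow> (real\<Rightarrow>real\<Rightarrow>real) \<Rightarrow> real \<Rightarrow> real" where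
  "Jf T u0 u \<gamma> r = deriv u0 0 - pd T [True] u (\<gamma> 0 r) r"
definition Kf :: "real \<Rightarrow> (real\<Rightarrow>real) \<Rightarrow> (real\<Rightarrow>real\<Rightarrow>real) \<Rightarrow> (real\<Rightarrow>real\<Rightarrow>real) \<Rightarrow> real \<Rightarrow> real" where
  "Kf T u0 u \<gamma> t = integral {0..t} (Jf T u0 u \<gamma>)"
definition Pf :: "real \<Rightarrow> (real\<Rightarrow>real) \<Rightarrow> (real\<Rightarrow>real\<Rightarrow>real) \<Rightarrow> (real\<Rightarrow>real\<Rightarrow>real) \<Rightarrow> real \<Rightarrow> real \<Rightarrow> real" where
  "Pf T u0 u \<gamma> \<beta> t = exp (t * deriv u0 \<beta> - Kf T u0 u \<gamma> t)"

context
  fixes u0 :: "real \<Rightarrow> real" and T :: real and u \<gamma> :: "real \<Rightarrow> real \<Rightarrow> real" and t1 :: real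
  assumes sm: "smooth1 u0" and per0: "\<forall>x. u0 (x + 1) = u0 x"
    and sol: "is_solution u0 T u" and ch: "is_characteristic T u \<gamma>"
    and t1: "0 \<le> t1" "t1 < T"
begin

lemma sos: "smooth_on_strip T u" using sol by (simp add: is_solution_def)

lemma sdx: "0 \<le> s \<Longrightarrow> s < T \<Longrightarrow> ((\<lambda>y. pd T ds u y s) has_real_derivative pd T (True#ds) u x s) (at x)"
  using sos unfolding smooth_on_strip_def
  by (simp add: pdx_def DERIV_deriv_iff_real_differentiable)

lemma sdt: "0 \<le> s \<Longrightarrow> s < T \<Longrightarrow> ((\<lambda>r. pd T ds u x r) has_real_derivative pd T (False#ds) u x s) (at s within {0..<T})"
  using sos unfolding smooth_on_strip_def
  by (simp add: pdt_def has_real_derivative_iff_has_vector_derivative vector_derivative_works[symmetric])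

lemma scont: "continuous_on (UNIV \<times> {0..<T}) (\<lambda>p. pd T ds u (fst p) (snd p))"
  using sos unfolding smooth_on_strip_def by blast

lemma Ssub: "{0..t1} \<subseteq> {0..<T}" using t1 by auto

lemma sdtS: "s \<in> {0..t1} \<Longrightarrow> ((\<lambda>r. pd T ds u x r) has_real_derivative pd T (False#ds) u x s) (at s within {0..t1})"
  using sdt[of s ds x] t1 by (auto intro: DERIV_subset[OF _ Ssub])

lemma scontS: "continuous_on (UNIV \<times> {0..t1}) (\<lambda>p. pd T ds u (fst p) (snd p))"
  by (rule continuous_on_subset[OF scont]) (use t1 in auto)

lemma chS: "s \<in> {0..t1} \<Longrightarrow> ((\<lambda>r. \<gamma> \<beta> r) has_real_derivative u (\<gamma> \<beta> s) s) (at s within {0..t1})"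
  using ch t1 unfolding is_characteristic_def by (auto intro: DERIV_subset[OF _ Ssub])

lemma gamma0: "\<gamma> \<beta> 0 = \<beta>" using ch unfolding is_characteristic_def by simp

lemma uinit: "u y 0 = u0 y" using sol unfolding is_solution_def by simp

lemma ux0: "pd T [True] u y 0 = deriv u0 y"
proof -
  have "(\<lambda>y. u y 0) = u0" using uinit by auto
  then show ?thesis by (simp add: pdx_def)
qed

lemma u_per: "0 \<le> s \<Longrightarrow> s < T \<Longrightarrow> u (x+1) s = u x s"
  using sol unfolding is_solution_def by simp

lemma ux_per: "0 \<le> s \<Longrightarrow> s < T \<Longrightarrow> pd T [True] u (x+1) s = pd T [True] u x s"
proof -
  assume s: "0 \<le> s" "s < T"
  have "deriv (\<lambda>y. u y s) (x+1) = deriv (\<lambda>y. u y s) x"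
    by (rule deriv_periodic) (use u_per[OF s] sdx[OF s, of "[]" "x+1"] in \<open>auto simp: real_differentiable_def\<close>)
  then show ?thesis by (simp add: pdx_def)
qed

lemma w_deriv:
  assumes s: "s \<in> {0..t1}"
  shows "((\<lambda>r. pd T [True] u (\<gamma> \<beta> r) r) has_real_derivative
           - integral {0..1} (\<lambda>y. (pd T [True] u y s)\<^sup>2)) (at s within {0..t1})"
proof -
  let ?S = "{0..t1}"
  let ?fx = "pd T [True,True] u (\<gamma> \<beta> s) s" and ?ft = "pd T [False,True] u (\<gamma> \<beta> s) s"
  have J: "((\<lambda>p. pd T [True] u (fst p) (snd p)) has_derivative (\<lambda>p. ?fx * fst p + ?ft * snd p))
      (at (\<gamma> \<beta> s, s) within UNIV \<times> ?S)"
    by (rule joint_deriv[where f="pd T [True] u" and fx="pd T [True,True] u"])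
       (use sdx[of _ "[True]"] t1 scontS[of "[True,True]"] sdtS[OF s, of "[True]"] s in auto)
  have G: "((\<lambda>r. (\<gamma> \<beta> r, r)) has_derivative (\<lambda>h. (u (\<gamma> \<beta> s) s * h, h))) (at s within ?S)"
    using chS[OF s, of \<beta>]
    by (auto intro!: has_derivative_Pair has_derivative_ident simp: has_field_derivative_def)
  have J': "((\<lambda>p. pd T [True] u (fst p) (snd p)) has_derivative (\<lambda>p. ?fx * fst p + ?ft * snd p))
      (at (\<gamma> \<beta> s, s) within (\<lambda>r. (\<gamma> \<beta> r, r)) ` ?S)"
    by (rule has_derivative_subset[OF J]) auto
  have "((\<lambda>p. pd T [True] u (fst p) (snd p)) \<circ> (\<lambda>r. (\<gamma> \<beta> r, r)) has_derivative
         (\<lambda>p. ?fx * fst p + ?ft * snd p) \<circ> (\<lambda>h. (u (\<gamma> \<beta> s) s * h, h))) (at s within ?S)"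
    using diff_chain_within[OF G] J' by simp
  then have "((\<lambda>r. pd T [True] u (\<gamma> \<beta> r) r) has_real_derivative ?fx * u (\<gamma> \<beta> s) s + ?ft) (at s within ?S)"
    unfolding has_field_derivative_def o_def fst_conv snd_conv
    by (rule has_derivative_eq_rhs) (auto simp: fun_eq_iff algebra_simps)
  moreover have "?ft + u (\<gamma> \<beta> s) s * ?fx = - integral {0..1} (\<lambda>y. (pd T [True] u y s)\<^sup>2)"
    using sol s t1 unfolding is_solution_def by auto
  ultimately show ?thesis by (simp add: algebra_simps)
qed

lemma w_const:
  assumes s: "s \<in> {0..t1}"
  shows "pd T [True] u (\<gamma> \<beta> s) s - pd T [True] u (\<gamma> 0 s) s = deriv u0 \<beta> - deriv u0 0"
proof -
  define e where "e r = pd T [True] u (\<gamma> \<beta> r) r - pd T [True] u (\<gamma> 0 r) r - (deriv u0 \<beta> - deriv u0 0)" for r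
  have "(e s)^2 \<le> ((e 0)^2 + 0^2) * exp ((2*0+1) * s)"
  proof (rule gronwall_sq[of s t1 0 0 e "\<lambda>_. 0"])
    fix r assume r: "r \<in> {0..t1}"
    show "(e has_real_derivative 0) (at r within {0..t1})"
      unfolding e_def using DERIV_diff[OF DERIV_diff[OF w_deriv[OF r, of \<beta>] w_deriv[OF r, of 0]] DERIV_const]
      by simp
  qed (use s in auto)
  moreover have "e 0 = 0" unfolding e_def using ux0[of \<beta>] ux0[of 0] by (simp add: gamma0)
  ultimately have "e s = 0" by simp
  then show ?thesis unfolding e_def by simp
qed

lemma ux_bound: "\<exists>Mx\<ge>0. \<forall>x. \<forall>s\<in>{0..t1}. \<bar>pd T [True] u x s\<bar> \<le> Mx"
proof -
  obtain B where "\<forall>x. \<forall>s\<in>{0..t1}. \<bar>pd T [True] u x s\<bar> \<le> B"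
    using periodic_bound[OF scontS[of "[True]"]] ux_per t1 by auto
  moreover then have "0 \<le> B" using t1 by (meson abs_ge_zero atLeastAtMost_iff order_trans order_refl)
  ultimately show ?thesis by blast
qed

lemma u_lip:
  assumes s: "s \<in> {0..t1}" and Mx: "\<forall>x. \<forall>s\<in>{0..t1}. \<bar>pd T [True] u x s\<bar> \<le> Mx"
  shows "\<bar>u y s - u y' s\<bar> \<le> Mx * \<bar>y - y'\<bar>"
proof -
  have s': "0 \<le> s" "s < T" using s t1 by auto
  obtain \<xi> where "u y s - u y' s = (y - y') * pd T [True] u \<xi> s"
    using mvt_abs[of "\<lambda>y. u y s" "\<lambda>y. pd T [True] u y s" y' y] sdx[OF s', of "[]"] by auto
  then have "\<bar>u y s - u y' s\<bar> = \<bar>y - y'\<bar> * \<bar>pd T [True] u \<xi> s\<bar>" by (simp add: abs_mult)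
  also have "\<dots> \<le> \<bar>y - y'\<bar> * Mx" using Mx s by (intro mult_left_mono) auto
  finally show ?thesis by (simp add: mult.commute)
qed

lemma shift1:
  assumes s: "s \<in> {0..t1}"
  shows "\<gamma> (\<beta>+1) s = \<gamma> \<beta> s + 1"
proof -
  obtain Mx where Mx0: "Mx \<ge> 0" and Mx: "\<forall>x. \<forall>s\<in>{0..t1}. \<bar>pd T [True] u x s\<bar> \<le> Mx"
    using ux_bound by blast
  define e where "e r = \<gamma> (\<beta>+1) r - \<gamma> \<beta> r - 1" for r
  have "(e s)^2 \<le> ((e 0)^2 + 0^2) * exp ((2*Mx+1) * s)"
  proof (rule gronwall_sq[of s t1 Mx 0 e "\<lambda>r. u (\<gamma> (\<beta>+1) r) r - u (\<gamma> \<beta> r) r"])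
    fix r assume r: "r \<in> {0..t1}"
    show "(e has_real_derivative u (\<gamma> (\<beta>+1) r) r - u (\<gamma> \<beta> r) r) (at r within {0..t1})"
      unfolding e_def using DERIV_diff[OF DERIV_diff[OF chS[OF r, of "\<beta>+1"] chS[OF r, of \<beta>]] DERIV_const]
      by simp
    have "u (\<gamma> \<beta> r) r = u (\<gamma> \<beta> r + 1) r" using u_per r t1 by simp
    then have "\<bar>u (\<gamma> (\<beta>+1) r) r - u (\<gamma> \<beta> r) r\<bar> \<le> Mx * \<bar>\<gamma> (\<beta>+1) r - (\<gamma> \<beta> r + 1)\<bar>"
      using u_lip[OF r Mx] by simp
    then show "\<bar>u (\<gamma> (\<beta>+1) r) r - u (\<gamma> \<beta> r) r\<bar> \<le> Mx * \<bar>e r\<bar> + 0"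
      unfolding e_def by (simp add: algebra_simps)
  qed (use s Mx0 in auto)
  moreover have "e 0 = 0" unfolding e_def by (simp add: gamma0)
  ultimately have "e s = 0" by simp
  then show ?thesis unfolding e_def by simp
qed

end


context
  fixes u0 :: "real \<Rightarrow> real" and T :: real and u \<gamma> :: "real \<Rightarrow> real \<Rightarrow> real" and t1 :: real
  assumes sm: "smooth1 u0" and per0: "\<forall>x. u0 (x + 1) = u0 x"
    and sol: "is_solution u0 T u" and ch: "is_characteristic T u \<gamma>"
    and t1: "0 \<le> t1" "t1 < T"
begin

lemma J_cont: "continuous_on {0..t1} (Jf T u0 u \<gamma>)"
proof -
  have "continuous_on {0..t1} (\<lambda>r. pd T [True] u (\<gamma> 0 r) r)"
    unfolding continuous_on_eq_continuous_within
    using w_deriv[OF sm per0 sol ch t1] DERIV_continuous by blast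
  then show ?thesis unfolding Jf_def[abs_def] by (intro continuous_intros)
qed

lemma K_deriv: "s \<in> {0..t1} \<Longrightarrow> (Kf T u0 u \<gamma> has_real_derivative Jf T u0 u \<gamma> s) (at s within {0..t1})"
  unfolding Kf_def[abs_def] has_real_derivative_iff_has_vector_derivative
  by (rule integral_has_vector_derivative[OF J_cont])

lemma K0: "Kf T u0 u \<gamma> 0 = 0" by (simp add: Kf_def)

lemma P0: "Pf T u0 u \<gamma> \<beta> 0 = 1" by (simp add: Pf_def K0)

lemma P_deriv:
  assumes s: "s \<in> {0..t1}"
  shows "((\<lambda>r. Pf T u0 u \<gamma> \<beta> r) has_real_derivative pd T [True] u (\<gamma> \<beta> s) s * Pf T u0 u \<gamma> \<beta> s) (at s within {0..t1})"
proof -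
  have "((\<lambda>r. Pf T u0 u \<gamma> \<beta> r) has_real_derivative
          exp (s * deriv u0 \<beta> - Kf T u0 u \<gamma> s) * (deriv u0 \<beta> - Jf T u0 u \<gamma> s)) (at s within {0..t1})"
    unfolding Pf_def by (auto intro!: derivative_eq_intros K_deriv[OF s])
  moreover have "deriv u0 \<beta> - Jf T u0 u \<gamma> s = pd T [True] u (\<gamma> \<beta> s) s"
    using w_const[OF sm per0 sol ch t1 s, of \<beta>] unfolding Jf_def by simp
  ultimately show ?thesis by (simp add: Pf_def mult.commute)
qed

lemma gamma_deriv:
  assumes t: "t \<in> {0..t1}"
  shows "((\<lambda>a. \<gamma> a t) has_real_derivative Pf T u0 u \<gamma> \<beta> t) (at \<beta>)"
proof -
  note ctx = sm per0 sol ch t1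
  obtain Mx where Mx0: "Mx \<ge> 0" and Mx: "\<forall>x. \<forall>s\<in>{0..t1}. \<bar>pd T [True] u x s\<bar> \<le> Mx"
    using ux_bound[OF ctx] by blast
  define L where "L = 2*Mx+1"
  define B where "B = exp (L * t1)"
  have L1: "1 \<le> L" using Mx0 by (simp add: L_def)
  have B1: "1 \<le> B" unfolding B_def using L1 t1 by simp
  have expB: "exp ((2*Mx+1) * s) \<le> B" if "s \<in> {0..t1}" for s
    unfolding B_def L_def using that L1 Mx0 by (auto intro!: mult_left_mono simp: L_def)
  have dbound: "\<bar>\<gamma> (\<beta>+h) s - \<gamma> \<beta> s\<bar> \<le> \<bar>h\<bar> * B" if s: "s \<in> {0..t1}" for h s
  proof -
    define d where "d r = \<gamma> (\<beta>+h) r - \<gamma> \<beta> r" for r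
    have "(d s)^2 \<le> ((d 0)^2 + 0^2) * exp ((2*Mx+1) * s)"
    proof (rule gronwall_sq[of s t1 Mx 0 d "\<lambda>r. u (\<gamma> (\<beta>+h) r) r - u (\<gamma> \<beta> r) r"])
      fix r assume r: "r \<in> {0..t1}"
      show "(d has_real_derivative u (\<gamma> (\<beta>+h) r) r - u (\<gamma> \<beta> r) r) (at r within {0..t1})"
        unfolding d_def using DERIV_diff[OF chS[OF ctx r, of "\<beta>+h"] chS[OF ctx r, of \<beta>]] by simp
      show "\<bar>u (\<gamma> (\<beta>+h) r) r - u (\<gamma> \<beta> r) r\<bar> \<le> Mx * \<bar>d r\<bar> + 0"
        using u_lip[OF ctx r Mx] unfolding d_def by simp
    qed (use s Mx0 in auto)
    also have "\<dots> \<le> h^2 * B" using expB[OF s] by (simp add: d_def gamma0[OF ctx] mult_left_mono)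
    also have "\<dots> \<le> h^2 * B^2" using B1 by (intro mult_left_mono) (auto simp: power2_eq_square)
    also have "\<dots> = (\<bar>h\<bar> * B)^2" by (simp add: power_mult_distrib)
    finally have "(d s)^2 \<le> (\<bar>h\<bar> * B)^2" .
    then have "\<bar>d s\<bar> \<le> \<bar>\<bar>h\<bar> * B\<bar>" by (simp add: abs_le_square_iff)
    then show ?thesis using B1 by (simp add: d_def)
  qed
  show ?thesis unfolding DERIV_def LIM_eq
  proof (intro allI impI)
    fix \<epsilon> :: real assume \<epsilon>: "0 < \<epsilon>"
    define \<epsilon>' where "\<epsilon>' = \<epsilon> / (2 * B * B)"
    have \<epsilon>': "0 < \<epsilon>'" unfolding \<epsilon>'_def using \<epsilon> B1 by simp
    obtain \<delta> where \<delta>: "\<delta> > 0" and h\<delta>: "\<forall>x y s s'. s \<in> {0..t1} \<longrightarrow> s' \<in> {0..t1} \<longrightarrow>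
             \<bar>x - y\<bar> < \<delta> \<longrightarrow> \<bar>s - s'\<bar> < \<delta> \<longrightarrow> \<bar>pd T [True] u x s - pd T [True] u y s'\<bar> < \<epsilon>'"
      using periodic_unif[OF scontS[OF ctx, of "[True]"] _ \<epsilon>'] ux_per[OF ctx] t1 by auto
    show "\<exists>r>0. \<forall>h. h \<noteq> 0 \<and> norm (h - 0) < r \<longrightarrow>
            norm ((\<gamma> (\<beta> + h) t - \<gamma> \<beta> t) / h - Pf T u0 u \<gamma> \<beta> t) < \<epsilon>"
    proof (intro exI[of _ "\<delta> / B"] conjI allI impI)
      show "0 < \<delta> / B" using \<delta> B1 by simp
      fix h :: real assume "h \<noteq> 0 \<and> norm (h - 0) < \<delta> / B"
      then have h0: "h \<noteq> 0" and hsm: "\<bar>h\<bar> < \<delta> / B" by auto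
      have hB: "\<bar>h\<bar> * B < \<delta>" using hsm B1 by (simp add: pos_less_divide_eq)
      define d where "d r = \<gamma> (\<beta>+h) r - \<gamma> \<beta> r" for r
      define e where "e r = d r / h - Pf T u0 u \<gamma> \<beta> r" for r
      define e' where "e' r = (u (\<gamma> (\<beta>+h) r) r - u (\<gamma> \<beta> r) r) / h
                          - pd T [True] u (\<gamma> \<beta> r) r * Pf T u0 u \<gamma> \<beta> r" for r
      have "(e t)^2 \<le> ((e 0)^2 + (\<epsilon>' * B)^2) * exp ((2*Mx+1) * t)"
      proof (rule gronwall_sq[of t t1 Mx "\<epsilon>' * B" e e'])
        fix r assume r: "r \<in> {0..t1}"
        show "(e has_real_derivative e' r) (at r within {0..t1})"
          unfolding e_def e'_def d_def
          using DERIV_diff[OF DERIV_cdivide[OF DERIV_diff[OF chS[OF ctx r, of "\<beta>+h"] chS[OF ctx r, of \<beta>]], of h]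
                              P_deriv[OF r, of \<beta>]] by simp
        let ?g = "\<gamma> \<beta> r" and ?dd = "d r"
        have r': "0 \<le> r" "r < T" using r t1 by auto
        obtain \<xi> where xi: "\<bar>\<xi> - ?g\<bar> \<le> \<bar>?g + ?dd - ?g\<bar>"
            and mv: "u (?g + ?dd) r - u ?g r = (?g + ?dd - ?g) * pd T [True] u \<xi> r"
          using mvt_abs[of "\<lambda>y. u y r" "\<lambda>y. pd T [True] u y r" ?g "?g + ?dd"] sdx[OF ctx r', of "[]"] by auto
        have gd: "\<gamma> (\<beta>+h) r = ?g + ?dd" by (simp add: d_def)
        have "\<bar>?dd\<bar> < \<delta>" using dbound[OF r, of h] hB unfolding d_def by simp
        then have cl: "\<bar>pd T [True] u \<xi> r - pd T [True] u ?g r\<bar> < \<epsilon>'"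
          using h\<delta> r xi by auto
        have qB: "\<bar>?dd / h\<bar> \<le> B" using dbound[OF r, of h] h0
          by (simp add: d_def abs_divide divide_le_eq mult.commute)
        have "e' r = pd T [True] u ?g r * e r + (pd T [True] u \<xi> r - pd T [True] u ?g r) * (?dd / h)"
          unfolding e'_def e_def gd using mv h0 by (simp add: field_simps)
        also have "\<bar>\<dots>\<bar> \<le> Mx * \<bar>e r\<bar> + \<epsilon>' * B"
        proof -
          have "\<bar>pd T [True] u ?g r * e r\<bar> \<le> Mx * \<bar>e r\<bar>"
            using Mx r by (simp add: abs_mult mult_right_mono)
          moreover have "\<bar>(pd T [True] u \<xi> r - pd T [True] u ?g r) * (?dd / h)\<bar> \<le> \<epsilon>' * B"
            unfolding abs_mult using cl qB \<epsilon>' by (intro mult_mono) auto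
          ultimately show ?thesis
            using abs_triangle_ineq[of "pd T [True] u ?g r * e r" "(pd T [True] u \<xi> r - pd T [True] u ?g r) * (?dd / h)"]
            by linarith
        qed
        finally show "\<bar>e' r\<bar> \<le> Mx * \<bar>e r\<bar> + \<epsilon>' * B" .
      qed (use t Mx0 \<epsilon>' B1 in auto)
      moreover have "e 0 = 0" unfolding e_def d_def using h0 by (simp add: gamma0[OF ctx] P0)
      ultimately have "(e t)^2 \<le> (\<epsilon>' * B)^2 * exp ((2*Mx+1) * t)" by simp
      also have "\<dots> \<le> (\<epsilon>' * B)^2 * B" using expB[OF t] by (intro mult_left_mono) auto
      also have "\<dots> \<le> (\<epsilon>' * B)^2 * B^2" using B1 by (intro mult_left_mono) (auto simp: power2_eq_square)
      also have "\<dots> = (\<epsilon>' * B * B)^2" by (simp add: power_mult_distrib)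
      finally have "\<bar>e t\<bar> \<le> \<bar>\<epsilon>' * B * B\<bar>" by (simp add: abs_le_square_iff)
      also have "\<dots> = \<epsilon> / 2" unfolding \<epsilon>'_def using B1 \<epsilon> by simp
      finally have "\<bar>e t\<bar> < \<epsilon>" using \<epsilon> by simp
      then show "norm ((\<gamma> (\<beta> + h) t - \<gamma> \<beta> t) / h - Pf T u0 u \<gamma> \<beta> t) < \<epsilon>"
        by (simp add: e_def d_def)
    qed
  qed
qed

end


context
  fixes u0 :: "real \<Rightarrow> real" and T :: real and u \<gamma> :: "real \<Rightarrow> real \<Rightarrow> real" and t1 :: real
  assumes sm: "smooth1 u0" and per0: "\<forall>x. u0 (x + 1) = u0 x"
    and sol: "is_solution u0 T u" and ch: "is_characteristic T u \<gamma>"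
    and t1: "0 \<le> t1" "t1 < T"
begin

lemma int_P:
  assumes t: "t \<in> {0..t1}"
  shows "Zf u0 0 t * exp (- Kf T u0 u \<gamma> t) = 1"
proof -
  note ctx = sm per0 sol ch t1
  have "((\<lambda>a. Pf T u0 u \<gamma> a t) has_integral (\<gamma> 1 t - \<gamma> 0 t)) {0..1}"
    by (rule fundamental_theorem_of_calculus)
       (auto simp: has_real_derivative_iff_has_vector_derivative[symmetric]
             intro!: has_field_derivative_at_within gamma_deriv[OF sm per0 sol ch t1 t])
  moreover have "\<gamma> 1 t - \<gamma> 0 t = 1" using shift1[OF ctx t, of 0] by simp
  ultimately have "integral {0..1} (\<lambda>a. Pf T u0 u \<gamma> a t) = 1" by (simp add: integral_unique)
  moreover have "(\<lambda>a. Pf T u0 u \<gamma> a t) = (\<lambda>a. exp (t * deriv u0 a) * exp (- Kf T u0 u \<gamma> t))"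
    by (simp add: Pf_def fun_eq_iff exp_diff exp_minus field_simps)
  ultimately show ?thesis by (simp add: Zf_def)
qed

lemma K_ln: "t \<in> {0..t1} \<Longrightarrow> Kf T u0 u \<gamma> t = ln (Zf u0 0 t)"
proof -
  assume t: "t \<in> {0..t1}"
  have "Zf u0 0 t = exp (Kf T u0 u \<gamma> t)" using int_P[OF t] by (simp add: exp_minus field_simps)
  then show ?thesis by simp
qed

lemma J_eq:
  assumes t: "0 \<le> t" "t < t1"
  shows "Jf T u0 u \<gamma> t = Zf u0 1 t / Zf u0 0 t"
proof (cases "t = 0")
  case True
  have "Jf T u0 u \<gamma> 0 = 0" using ux0[OF sm per0 sol ch t1, of 0] by (simp add: Jf_def gamma0[OF sm per0 sol ch t1])
  then show ?thesis using True Zf1_0[OF sm per0] by simp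
next
  case False
  then have tin: "t \<in> {0<..<t1}" using t by auto
  have "at t within {0..t1} = at t" using tin by (intro at_within_interior) auto
  then have dK: "(Kf T u0 u \<gamma> has_real_derivative Jf T u0 u \<gamma> t) (at t)"
    using K_deriv[OF sm per0 sol ch t1, of t] t by auto
  have dL: "((\<lambda>s. ln (Zf u0 0 s)) has_real_derivative Zf u0 1 t / Zf u0 0 t) (at t)"
    using Zf_deriv[OF sm per0, where k=0 and t=t] Zf0_pos[OF sm per0, of t] t
    by (auto intro!: derivative_eq_intros simp: field_simps)
  have "(Kf T u0 u \<gamma> has_real_derivative Zf u0 1 t / Zf u0 0 t) (at t)"
    by (rule has_field_derivative_transform_within_open[OF dL, of "{0<..<t1}"])
       (use tin K_ln in auto)
  then show ?thesis using DERIV_unique[OF dK] by blast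
qed

lemma main1:
  assumes t: "0 \<le> t" "t < t1"
  shows "((\<lambda>a. \<gamma> a t) has_real_derivative
                  exp (t * deriv u0 \<alpha>) / integral {0..1} (\<lambda>\<beta>. exp (t * deriv u0 \<beta>))) (at \<alpha>)
            \<and> pd T [True] u (\<gamma> \<alpha> t) t
                = deriv u0 \<alpha> - integral {0..1} (\<lambda>\<beta>. deriv u0 \<beta> * exp (t * deriv u0 \<beta>))
                                / integral {0..1} (\<lambda>\<beta>. exp (t * deriv u0 \<beta>))
            \<and> 0 \<le> deriv u0 \<alpha> - pd T [True] u (\<gamma> \<alpha> t) t
            \<and> deriv u0 \<alpha> - pd T [True] u (\<gamma> \<alpha> t) t
                \<le> integral {0..1} (\<lambda>\<beta>. deriv u0 \<beta> * exp (t * deriv u0 \<beta>))"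
proof -
  note ctx = sm per0 sol ch t1
  have tS: "t \<in> {0..t1}" using t by auto
  have Z0p: "0 < Zf u0 0 t" using Zf0_pos[OF sm per0] t by simp
  have Z01: "1 \<le> Zf u0 0 t" using Zf0_ge1[OF sm per0] t by simp
  have Z1: "0 \<le> Zf u0 1 t" using Zf1_ge0[OF sm per0] t by simp
  have P: "Pf T u0 u \<gamma> \<alpha> t = exp (t * deriv u0 \<alpha>) / Zf u0 0 t"
    using K_ln[OF tS] Z0p by (simp add: Pf_def exp_diff)
  have w: "pd T [True] u (\<gamma> \<alpha> t) t = deriv u0 \<alpha> - Zf u0 1 t / Zf u0 0 t"
    using w_const[OF ctx tS, of \<alpha>] J_eq[OF t] unfolding Jf_def by simp
  have d: "deriv u0 \<alpha> - pd T [True] u (\<gamma> \<alpha> t) t = Zf u0 1 t / Zf u0 0 t" using w by simp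
  have le: "Zf u0 1 t / Zf u0 0 t \<le> Zf u0 1 t"
  proof -
    have "Zf u0 1 t * 1 \<le> Zf u0 1 t * Zf u0 0 t" by (rule mult_left_mono[OF Z01 Z1])
    then show ?thesis using Z0p by (simp add: divide_le_eq mult.commute)
  qed
  have g: "((\<lambda>a. \<gamma> a t) has_real_derivative exp (t * deriv u0 \<alpha>) / Zf u0 0 t) (at \<alpha>)"
    using gamma_deriv[OF sm per0 sol ch t1 tS, of \<alpha>] P by simp
  have nn: "0 \<le> Zf u0 1 t / Zf u0 0 t" using Z1 Z0p by simp
  show ?thesis unfolding Zf0[symmetric] Zf1[symmetric]
    using g w d le nn by simp
qed

end


definition prim :: "(real \<Rightarrow> real) \<Rightarrow> real \<Rightarrow> real" where
  "prim f x = (if 0 \<le> x then integral {0..x} f else - integral {x..0} f)"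

definition ii :: "real \<Rightarrow> real \<Rightarrow> (real \<Rightarrow> real) \<Rightarrow> real" where
  "ii a b f = prim f b - prim f a"

lemma comb_cont:
  fixes f :: "real \<Rightarrow> real"
  assumes "continuous_on UNIV f" "x \<le> y" "y \<le> z"
  shows "integral {x..y} f + integral {y..z} f = integral {x..z} f"
  using assms by (intro Henstock_Kurzweil_Integration.integral_combine) (auto intro!: integrable_continuous_interval continuous_on_subset[OF assms(1)])

lemma prim_shift:
  fixes f :: "real \<Rightarrow> real"
  assumes f: "continuous_on UNIV f" and cy: "c \<le> y"
  shows "prim f y - prim f c = integral {c..y} f"
proof -
  consider "0 \<le> c" | "c < 0" "0 \<le> y" | "y < 0" using cy by linarith
  then show ?thesis
  proof cases
    case 1 then show ?thesis using comb_cont[OF f, of 0 c y] cy by (simp add: prim_def)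
  next
    case 2 then show ?thesis using comb_cont[OF f, of c 0 y] by (simp add: prim_def)
  next
    case 3 then show ?thesis using comb_cont[OF f, of c y 0] cy by (simp add: prim_def)
  qed
qed

lemma prim_deriv:
  fixes f :: "real \<Rightarrow> real"
  assumes f: "continuous_on UNIV f"
  shows "(prim f has_real_derivative f x) (at x)"
proof -
  have "((\<lambda>y. integral {x-1..y} f) has_real_derivative f x) (at x within {x-1..x+1})"
    unfolding has_real_derivative_iff_has_vector_derivative
    by (rule integral_has_vector_derivative) (auto intro: continuous_on_subset[OF f])
  moreover have "at x within {x-1..x+1} = at x" by (intro at_within_interior) auto
  ultimately have "((\<lambda>y. prim f (x-1) + integral {x-1..y} f) has_real_derivative f x) (at x)"
    by (auto intro!: derivative_eq_intros)
  then show ?thesis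
  proof (rule has_field_derivative_transform_within_open[of _ _ _ "{x-1<..}"])
    fix y :: real assume "y \<in> {x-1<..}"
    then show "prim f (x - 1) + integral {x - 1..y} f = prim f y"
      using prim_shift[OF f, of "x-1" y] by simp
  qed auto
qed

lemma ii_deriv: "continuous_on UNIV f \<Longrightarrow> ((\<lambda>b. ii a b f) has_real_derivative f x) (at x)"
  unfolding ii_def by (auto intro!: derivative_eq_intros prim_deriv)

lemma ii_integral: "continuous_on UNIV f \<Longrightarrow> a \<le> b \<Longrightarrow> ii a b f = integral {a..b} f"
  unfolding ii_def by (rule prim_shift)

lemma ii_add: "ii a b f + ii b c f = ii a c f"
  unfolding ii_def by simp

lemma ii_same: "ii a a f = 0" unfolding ii_def by simp

lemma ii_FTC:
  fixes F f :: "real \<Rightarrow> real"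
  assumes f: "continuous_on UNIV f" and F: "\<And>x. (F has_real_derivative f x) (at x)"
  shows "ii a b f = F b - F a"
proof -
  have "\<forall>x. ((\<lambda>x. prim f x - F x) has_real_derivative 0) (at x)"
    using prim_deriv[OF f] F by (auto intro!: derivative_eq_intros)
  then have "\<And>x y. prim f x - F x = prim f y - F y"
    using DERIV_isconst_all by blast
  from this[of b a] show ?thesis unfolding ii_def by simp
qed

lemma ii_periodic:
  fixes f :: "real \<Rightarrow> real"
  assumes f: "continuous_on UNIV f" and per: "\<And>x. f (x+1) = f x"
  shows "ii a (a+1) f = integral {0..1} f"
proof -
  have "\<forall>x. ((\<lambda>x. prim f (x+1) - prim f x) has_real_derivative 0) (at x)"
  proof
    fix x
    have "((\<lambda>x. prim f (x+1) - prim f x) has_real_derivative f (x+1) * 1 - f x) (at x)"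
      by (auto intro!: derivative_eq_intros DERIV_chain2[OF prim_deriv[OF f]] prim_deriv[OF f])
    then show "((\<lambda>x. prim f (x+1) - prim f x) has_real_derivative 0) (at x)" using per by simp
  qed
  then have "prim f (a+1) - prim f a = prim f (0+1) - prim f 0" using DERIV_isconst_all by blast
  also have "\<dots> = integral {0..1} f" using prim_shift[OF f, of 0 1] by simp
  finally show ?thesis unfolding ii_def .
qed

lemma prim_param_deriv:
  fixes g gx :: "real \<Rightarrow> real \<Rightarrow> real"
  assumes d: "\<And>x b. ((\<lambda>x. g x b) has_real_derivative gx x b) (at x)"
    and cg: "\<And>x. continuous_on UNIV (g x)"
    and cgx: "continuous_on UNIV (\<lambda>(x, b). gx x b)"
  shows "((\<lambda>x. prim (g x) a) has_real_derivative prim (gx x0) a) (at x0)"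
proof (cases "0 \<le> a")
  case True
  have "((\<lambda>x. integral (cbox 0 a) (g x)) has_real_derivative integral (cbox 0 a) (gx x0)) (at x0 within UNIV)"
    by (rule leibniz_rule_field_derivative)
       (auto intro!: integrable_continuous_interval intro: continuous_on_subset[OF cg] continuous_on_subset[OF cgx] d)
  then show ?thesis using True by (simp add: prim_def)
next
  case False
  have "((\<lambda>x. integral (cbox a 0) (g x)) has_real_derivative integral (cbox a 0) (gx x0)) (at x0 within UNIV)"
    by (rule leibniz_rule_field_derivative)
       (auto intro!: integrable_continuous_interval intro: continuous_on_subset[OF cg] continuous_on_subset[OF cgx] d)
  then have "((\<lambda>x. - integral (cbox a 0) (g x)) has_real_derivative - integral (cbox a 0) (gx x0)) (at x0)"
    by (auto intro!: derivative_eq_intros)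
  then show ?thesis using False by (simp add: prim_def)
qed


definition Ff :: "(real \<Rightarrow> real) \<Rightarrow> nat \<Rightarrow> real \<Rightarrow> real \<Rightarrow> real" where
  "Ff u0 k a s = ii 0 a (\<lambda>b. deriv u0 b ^ k * exp (s * deriv u0 b))"

definition HD :: "(real\<Rightarrow>real\<Rightarrow>real) \<Rightarrow> (real\<Rightarrow>real\<Rightarrow>real) \<Rightarrow> (real\<Rightarrow>real\<Rightarrow>real) \<Rightarrow> bool" where
  "HD G Ga Gt \<longleftrightarrow> (\<forall>a s. ((\<lambda>p. G (fst p) (snd p)) has_derivative (\<lambda>p. Ga a s * fst p + Gt a s * snd p)) (at (a,s)))"

lemma HD_joint:
  assumes "\<And>a s. ((\<lambda>a. G a s) has_real_derivative Ga a s) (at a)"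
    and "continuous_on UNIV (\<lambda>p. Ga (fst p) (snd p))"
    and "\<And>a s. ((\<lambda>s. G a s) has_real_derivative Gt a s) (at s)"
  shows "HD G Ga Gt"
  unfolding HD_def
proof (intro allI)
  fix a s
  have "((\<lambda>p. G (fst p) (snd p)) has_derivative (\<lambda>p. Ga a s * fst p + Gt a s * snd p)) (at (a,s) within UNIV \<times> UNIV)"
    by (rule joint_deriv[where f=G and fx=Ga]) (use assms in auto)
  then show "((\<lambda>p. G (fst p) (snd p)) has_derivative (\<lambda>p. Ga a s * fst p + Gt a s * snd p)) (at (a,s))"
    by simp
qed

lemma HD_add:
  assumes "HD G Ga Gt" "HD H Ha Ht"
  shows "HD (\<lambda>a s. G a s + H a s) (\<lambda>a s. Ga a s + Ha a s) (\<lambda>a s. Gt a s + Ht a s)"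
  using assms unfolding HD_def
  by (auto intro!: has_derivative_eq_rhs[OF has_derivative_add] simp: algebra_simps fun_eq_iff)

lemma HD_mult:
  assumes "HD G Ga Gt" "HD H Ha Ht"
  shows "HD (\<lambda>a s. G a s * H a s) (\<lambda>a s. Ga a s * H a s + G a s * Ha a s) (\<lambda>a s. Gt a s * H a s + G a s * Ht a s)"
  unfolding HD_def
proof (intro allI)
  fix a s
  have "((\<lambda>p. G (fst p) (snd p) * H (fst p) (snd p)) has_derivative
      (\<lambda>h. G (fst (a,s)) (snd (a,s)) * (Ha a s * fst h + Ht a s * snd h) + (Ga a s * fst h + Gt a s * snd h) * H (fst (a,s)) (snd (a,s)))) (at (a,s))"
    using assms unfolding HD_def by (intro has_derivative_mult) auto
  then show "((\<lambda>p. G (fst p) (snd p) * H (fst p) (snd p)) has_derivative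
      (\<lambda>p. (Ga a s * H a s + G a s * Ha a s) * fst p + (Gt a s * H a s + G a s * Ht a s) * snd p)) (at (a,s))"
    by (rule has_derivative_eq_rhs) (auto simp: algebra_simps fun_eq_iff)
qed

lemma HD_const: "HD (\<lambda>a s. c) (\<lambda>a s. 0) (\<lambda>a s. 0)"
  unfolding HD_def by (auto intro!: has_derivative_eq_rhs[OF has_derivative_const])

lemma HD_svar: "HD (\<lambda>a s. s) (\<lambda>a s. 0) (\<lambda>a s. 1)"
  unfolding HD_def by (auto intro!: has_derivative_eq_rhs[OF has_derivative_snd[OF has_derivative_ident]])

lemma HD_afun:
  assumes "\<And>a. (f has_real_derivative f' a) (at a)"
  shows "HD (\<lambda>a s. f a) (\<lambda>a s. f' a) (\<lambda>a s. 0)"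
  unfolding HD_def
proof (intro allI)
  fix a s :: real
  have fa: "(f has_derivative (\<lambda>h. h * f' a)) (at a)"
    by (rule has_derivative_eq_rhs[OF assms[of a, unfolded has_field_derivative_def]]) (simp add: fun_eq_iff mult.commute)
  have "((\<lambda>p. f (fst p)) has_derivative (\<lambda>p. fst p * f' a)) (at (a,s))"
  proof -
    have fa': "(f has_derivative (\<lambda>h. h * f' a)) (at (fst (a,s)))" using fa by simp
    show ?thesis using has_derivative_compose[OF has_derivative_fst[OF has_derivative_ident, of "at (a,s)"] fa'] by simp
  qed
  then show "((\<lambda>p. f (fst p)) has_derivative (\<lambda>p. f' a * fst p + 0 * snd p)) (at (a, s))"
    by (rule has_derivative_eq_rhs) (auto simp: fun_eq_iff mult.commute)
qed

lemma HD_sfun: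
  assumes "\<And>s. (f has_real_derivative f' s) (at s)"
  shows "HD (\<lambda>a s. f s) (\<lambda>a s. 0) (\<lambda>a s. f' s)"
  unfolding HD_def
proof (intro allI)
  fix a s :: real
  have fa: "(f has_derivative (\<lambda>h. h * f' s)) (at s)"
    by (rule has_derivative_eq_rhs[OF assms[of s, unfolded has_field_derivative_def]]) (simp add: fun_eq_iff mult.commute)
  have "((\<lambda>p. f (snd p)) has_derivative (\<lambda>p. snd p * f' s)) (at (a,s))"
  proof -
    have fa': "(f has_derivative (\<lambda>h. h * f' s)) (at (snd (a,s)))" using fa by simp
    show ?thesis using has_derivative_compose[OF has_derivative_snd[OF has_derivative_ident, of "at (a,s)"] fa'] by simp
  qed
  then show "((\<lambda>p. f (snd p)) has_derivative (\<lambda>p. 0 * fst p + f' s * snd p)) (at (a, s))"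
    by (rule has_derivative_eq_rhs) (auto simp: fun_eq_iff mult.commute)
qed

lemma HD_cont: assumes "HD G Ga Gt" shows "continuous_on UNIV (\<lambda>p. G (fst p) (snd p))"
proof (intro continuous_at_imp_continuous_on ballI)
  fix p :: "real \<times> real"
  obtain a s where p: "p = (a,s)" by (cases p)
  show "isCont (\<lambda>p. G (fst p) (snd p)) p"
    using assms unfolding HD_def p by (blast intro: has_derivative_continuous)
qed


inductive_set S2 :: "(real \<Rightarrow> real) \<Rightarrow> (real \<Rightarrow> real \<Rightarrow> real) set" for u0 where
  const: "(\<lambda>a s. c) \<in> S2 u0"
| svar: "(\<lambda>a s. s) \<in> S2 u0"
| Dk: "(\<lambda>a s. (deriv^^k) u0 a) \<in> S2 u0"
| Ep: "(\<lambda>a s. exp (s * deriv u0 a)) \<in> S2 u0"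
| Em: "(\<lambda>a s. exp (- (s * deriv u0 a))) \<in> S2 u0"
| Fk: "(\<lambda>a s. Ff u0 k a s) \<in> S2 u0"
| Zk: "(\<lambda>a s. Zf u0 k s) \<in> S2 u0"
| Zi: "(\<lambda>a s. 1 / Zf u0 0 s) \<in> S2 u0"
| add: "G \<in> S2 u0 \<Longrightarrow> H \<in> S2 u0 \<Longrightarrow> (\<lambda>a s. G a s + H a s) \<in> S2 u0"
| mult: "G \<in> S2 u0 \<Longrightarrow> H \<in> S2 u0 \<Longrightarrow> (\<lambda>a s. G a s * H a s) \<in> S2 u0"

lemma S2_D1: "(\<lambda>a s. deriv u0 a) \<in> S2 u0" using S2.Dk[of 1 u0] by simp
lemma S2_D2: "(\<lambda>a s. deriv (deriv u0) a) \<in> S2 u0" using S2.Dk[of 2 u0] by (simp add: numeral_2_eq_2)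
lemma S2_pow: "(\<lambda>a s. deriv u0 a ^ k) \<in> S2 u0"
proof (induction k)
  case 0 then show ?case using S2.const[of 1 u0] by simp
next
  case (Suc k)
  have "(\<lambda>a s. deriv u0 a * deriv u0 a ^ k) \<in> S2 u0" by (rule S2.mult[OF S2_D1 Suc])
  then show ?case by simp
qed
lemma S2_diff: "G \<in> S2 u0 \<Longrightarrow> H \<in> S2 u0 \<Longrightarrow> (\<lambda>a s. G a s - H a s) \<in> S2 u0"
proof -
  assume "G \<in> S2 u0" "H \<in> S2 u0"
  then have "(\<lambda>a s. G a s + (-1) * H a s) \<in> S2 u0" by (intro S2.add S2.mult S2.const)
  then show ?thesis by simp
qed

context
  fixes u0 :: "real \<Rightarrow> real"
  assumes sm: "smooth1 u0" and per0: "\<forall>x. u0 (x + 1) = u0 x"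
begin

lemma integrand_cont: "continuous_on UNIV (\<lambda>b. deriv u0 b ^ k * exp (s * deriv u0 b))"
  by (intro continuous_intros D1_cont_intro[OF sm per0])

lemma Ff_da: "((\<lambda>a. Ff u0 k a s) has_real_derivative deriv u0 a ^ k * exp (s * deriv u0 a)) (at a)"
  unfolding Ff_def by (rule ii_deriv[OF integrand_cont])

lemma Ff_ds: "((\<lambda>s. Ff u0 k a s) has_real_derivative Ff u0 (Suc k) a s) (at s)"
proof -
  have cgx: "continuous_on UNIV (\<lambda>(x, b). deriv u0 b ^ k * (exp (x * deriv u0 b) * deriv u0 b))"
    unfolding split_beta by (intro continuous_intros D1_cont_intro[OF sm per0])
  have d: "\<And>x b. ((\<lambda>x. deriv u0 b ^ k * exp (x * deriv u0 b)) has_real_derivative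
                    deriv u0 b ^ k * (exp (x * deriv u0 b) * deriv u0 b)) (at x)"
    by (auto intro!: derivative_eq_intros)
  have "((\<lambda>x. prim (\<lambda>b. deriv u0 b ^ k * exp (x * deriv u0 b)) a - prim (\<lambda>b. deriv u0 b ^ k * exp (x * deriv u0 b)) 0)
        has_real_derivative prim (\<lambda>b. deriv u0 b ^ k * (exp (s * deriv u0 b) * deriv u0 b)) a
                          - prim (\<lambda>b. deriv u0 b ^ k * (exp (s * deriv u0 b) * deriv u0 b)) 0) (at s)"
    by (intro DERIV_diff prim_param_deriv[OF d integrand_cont cgx])
  moreover have "(\<lambda>b. deriv u0 b ^ k * (exp (s * deriv u0 b) * deriv u0 b)) = (\<lambda>b. deriv u0 b ^ Suc k * exp (s * deriv u0 b))"
    by (simp add: fun_eq_iff mult_ac)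
  ultimately show ?thesis unfolding Ff_def ii_def by simp
qed

lemma Ff_per: "Ff u0 k (a+1) s = Ff u0 k a s + Zf u0 k s"
proof -
  have "ii a (a+1) (\<lambda>b. deriv u0 b ^ k * exp (s * deriv u0 b)) = Zf u0 k s"
    unfolding Zf_def by (rule ii_periodic[OF integrand_cont]) (simp add: D1_per[OF sm per0])
  then show ?thesis unfolding Ff_def
    using ii_add[of 0 a "\<lambda>b. deriv u0 b ^ k * exp (s * deriv u0 b)" "a+1"] by linarith
qed

lemma Zf0_ge1': "1 \<le> Zf u0 0 t"
proof -
  have "integral {0..1} (\<lambda>b. 1 + t * deriv u0 b) \<le> integral {0..1} (\<lambda>b. exp (t * deriv u0 b))"
    by (rule integral_le) (auto intro!: integrable_continuous_interval continuous_intros D1_cont_intro[OF sm per0])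
  moreover have "integral {0..1} (\<lambda>b. 1 + t * deriv u0 b) = 1"
  proof -
    have "((\<lambda>b. 1 + t * deriv u0 b) has_integral ((1 + t * u0 1) - (0 + t * u0 0))) {0..1}"
      by (rule fundamental_theorem_of_calculus)
         (auto simp: has_real_derivative_iff_has_vector_derivative[symmetric]
             intro!: derivative_eq_intros has_field_derivative_at_within[OF u0_deriv[OF sm per0]])
    then show ?thesis using u0_per_int[OF sm per0] by (simp add: integral_unique algebra_simps)
  qed
  ultimately show ?thesis by (simp add: Zf_def)
qed

lemma Zf0_pos': "0 < Zf u0 0 t" using Zf0_ge1'[of t] by simp

lemma HD_Dk: "HD (\<lambda>a s. (deriv^^k) u0 a) (\<lambda>a s. (deriv^^Suc k) u0 a) (\<lambda>a s. 0)"
  by (rule HD_afun) (rule Dk_deriv[OF sm per0])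

lemma HD_Ep: "HD (\<lambda>a s. exp (s * deriv u0 a)) (\<lambda>a s. s * deriv (deriv u0) a * exp (s * deriv u0 a))
                 (\<lambda>a s. deriv u0 a * exp (s * deriv u0 a))"
  by (rule HD_joint)
     (auto intro!: derivative_eq_intros D1_deriv[OF sm per0] continuous_intros
                   D1_cont_intro[OF sm per0] D2_cont_intro[OF sm per0] simp: mult_ac)

lemma HD_Em: "HD (\<lambda>a s. exp (- (s * deriv u0 a))) (\<lambda>a s. -1 * (s * deriv (deriv u0) a * exp (- (s * deriv u0 a))))
                 (\<lambda>a s. -1 * (deriv u0 a * exp (- (s * deriv u0 a))))"
  by (rule HD_joint)
     (auto intro!: derivative_eq_intros D1_deriv[OF sm per0] continuous_intros
                   D1_cont_intro[OF sm per0] D2_cont_intro[OF sm per0] simp: mult_ac)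

lemma HD_Ff: "HD (\<lambda>a s. Ff u0 k a s) (\<lambda>a s. deriv u0 a ^ k * exp (s * deriv u0 a)) (\<lambda>a s. Ff u0 (Suc k) a s)"
  by (rule HD_joint[OF Ff_da _ Ff_ds])
     (auto intro!: continuous_intros D1_cont_intro[OF sm per0])

lemma HD_Zf: "HD (\<lambda>a s. Zf u0 k s) (\<lambda>a s. 0) (\<lambda>a s. Zf u0 (Suc k) s)"
  by (rule HD_sfun) (rule Zf_deriv[OF sm per0])

lemma HD_Zi: "HD (\<lambda>a s. 1 / Zf u0 0 s) (\<lambda>a s. 0) (\<lambda>a s. -1 * (Zf u0 1 s * (1 / Zf u0 0 s * (1 / Zf u0 0 s))))"
proof (rule HD_sfun)
  fix s
  have "((\<lambda>s. 1 / Zf u0 0 s) has_real_derivative - (Zf u0 (Suc 0) s) / (Zf u0 0 s)^2) (at s)"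
    using Zf_deriv[OF sm per0, where k=0 and t=s] Zf0_pos'[of s]
    by (auto intro!: derivative_eq_intros simp: power2_eq_square field_simps)
  then show "((\<lambda>s. 1 / Zf u0 0 s) has_real_derivative -1 * (Zf u0 1 s * (1 / Zf u0 0 s * (1 / Zf u0 0 s)))) (at s)"
    by (simp add: power2_eq_square field_simps)
qed

lemma S2_HD: "G \<in> S2 u0 \<Longrightarrow> \<exists>Ga\<in>S2 u0. \<exists>Gt\<in>S2 u0. HD G Ga Gt"
proof (induction rule: S2.induct)
  case (const c) then show ?case using HD_const S2.const by blast
next
  case svar then show ?case using HD_svar S2.const S2.const by blast
next
  case (Dk k) then show ?case using HD_Dk S2.Dk S2.const by blast
next
  case Ep then show ?case
    using HD_Ep S2.mult[OF S2.mult[OF S2.svar S2_D2] S2.Ep] S2.mult[OF S2_D1 S2.Ep] by blast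
next
  case Em then show ?case
    using HD_Em S2.mult[OF S2.const S2.mult[OF S2.mult[OF S2.svar S2_D2] S2.Em]]
      S2.mult[OF S2.const S2.mult[OF S2_D1 S2.Em]] by blast
next
  case (Fk k) then show ?case using HD_Ff[of k] S2.mult[OF S2_pow S2.Ep] S2.Fk by blast
next
  case (Zk k) then show ?case using HD_Zf[of k] S2.const S2.Zk by blast
next
  case Zi then show ?case
    using HD_Zi S2.const S2.mult[OF S2.const S2.mult[OF S2.Zk S2.mult[OF S2.Zi S2.Zi]]] by blast
next
  case (add G H)
  then obtain Ga Gt Ha Ht where "Ga \<in> S2 u0" "Gt \<in> S2 u0" "HD G Ga Gt" "Ha \<in> S2 u0" "Ht \<in> S2 u0" "HD H Ha Ht"
    by blast
  then show ?case using HD_add S2.add by blast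
next
  case (mult G H)
  then obtain Ga Gt Ha Ht where "Ga \<in> S2 u0" "Gt \<in> S2 u0" "HD G Ga Gt" "Ha \<in> S2 u0" "Ht \<in> S2 u0" "HD H Ha Ht"
    by blast
  then show ?case using HD_mult[of G Ga Gt H Ha Ht] S2.add S2.mult mult.hyps by blast
qed

end


definition Gam :: "(real \<Rightarrow> real) \<Rightarrow> real \<Rightarrow> real \<Rightarrow> real" where
  "Gam u0 a s = s * u0 0 + Ff u0 0 a s * (1 / Zf u0 0 s)"
definition Gam_a :: "(real \<Rightarrow> real) \<Rightarrow> real \<Rightarrow> real \<Rightarrow> real" where
  "Gam_a u0 a s = exp (s * deriv u0 a) * (1 / Zf u0 0 s)"
definition Gam_t :: "(real \<Rightarrow> real) \<Rightarrow> real \<Rightarrow> real \<Rightarrow> real" where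
  "Gam_t u0 a s = u0 0 + Ff u0 1 a s / Zf u0 0 s - Ff u0 0 a s * Zf u0 1 s / (Zf u0 0 s)^2"
definition Rf :: "(real \<Rightarrow> real) \<Rightarrow> real \<Rightarrow> real \<Rightarrow> real" where
  "Rf u0 a s = Zf u0 0 s * exp (- (s * deriv u0 a))"
definition phi :: "(real \<Rightarrow> real) \<Rightarrow> real \<Rightarrow> real \<Rightarrow> real" where
  "phi u0 x s = (THE a. Gam u0 a s = x)"

lemma HD_cong:
  assumes "HD G Ga Gt" "\<And>a s. G' a s = G a s" "\<And>a s. Ga' a s = Ga a s" "\<And>a s. Gt' a s = Gt a s"
  shows "HD G' Ga' Gt'"
proof -
  have "G' = G" "Ga' = Ga" "Gt' = Gt" using assms(2-4) by (auto simp: fun_eq_iff)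
  then show ?thesis using assms(1) by simp
qed

context
  fixes u0 :: "real \<Rightarrow> real"
  assumes sm: "smooth1 u0" and per0: "\<forall>x. u0 (x + 1) = u0 x"
begin

lemma HD_Gam: "HD (Gam u0) (Gam_a u0) (Gam_t u0)"
  by (rule HD_cong[OF HD_add[OF HD_mult[OF HD_svar HD_const[of "u0 0"]] HD_mult[OF HD_Ff[OF sm per0, of 0] HD_Zi[OF sm per0]]]])
     (auto simp: Gam_def Gam_a_def Gam_t_def field_simps power2_eq_square)

lemma S2_Gam_t: "Gam_t u0 \<in> S2 u0"
proof -
  have "(\<lambda>a s. u0 0 + (Ff u0 1 a s * (1 / Zf u0 0 s) + -1 * ((Ff u0 0 a s * Zf u0 1 s) * (1 / Zf u0 0 s * (1 / Zf u0 0 s))))) \<in> S2 u0"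
    by (intro S2.intros)
  moreover have "(\<lambda>a s. u0 0 + (Ff u0 1 a s * (1 / Zf u0 0 s) + -1 * ((Ff u0 0 a s * Zf u0 1 s) * (1 / Zf u0 0 s * (1 / Zf u0 0 s))))) = Gam_t u0"
    by (auto simp: fun_eq_iff Gam_t_def field_simps power2_eq_square)
  ultimately show ?thesis by simp
qed

lemma S2_Rf: "Rf u0 \<in> S2 u0"
proof -
  have "(\<lambda>a s. Zf u0 0 s * exp (- (s * deriv u0 a))) \<in> S2 u0" by (intro S2.intros)
  then show ?thesis by (simp add: Rf_def[abs_def])
qed

lemma Gam_a_pos: "0 < Gam_a u0 a s"
  using Zf0_pos'[OF sm per0] by (simp add: Gam_a_def)

lemma Rf_Gam_a: "Rf u0 a s * Gam_a u0 a s = 1"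
  using Zf0_pos'[OF sm per0, of s] by (simp add: Rf_def Gam_a_def exp_minus field_simps)

lemma Gam_da: "((\<lambda>a. Gam u0 a s) has_real_derivative Gam_a u0 a s) (at a)"
  unfolding Gam_def Gam_a_def
  using Ff_da[OF sm per0, of 0 s a] Zf0_pos'[OF sm per0, of s] by (auto intro!: derivative_eq_intros)

lemma Gam_ds_cont: "isCont (Gam u0 a) s"
proof -
  have "continuous_on UNIV (\<lambda>p. Gam u0 (fst p) (snd p))" by (rule HD_cont[OF HD_Gam])
  then have "continuous_on UNIV ((\<lambda>p. Gam u0 (fst p) (snd p)) \<circ> (\<lambda>s. (a, s)))"
    by (intro continuous_on_compose continuous_intros) (auto elim: continuous_on_subset)
  then show ?thesis by (simp add: o_def continuous_on_eq_continuous_at)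
qed

lemma Gam_cont_a: "isCont (\<lambda>a. Gam u0 a s) a"
  using Gam_da DERIV_isCont by blast

lemma Gam_strict: "a < b \<Longrightarrow> Gam u0 a s < Gam u0 b s"
  by (rule DERIV_pos_imp_increasing[of a b "\<lambda>a. Gam u0 a s"]) (use Gam_da Gam_a_pos in blast)+

lemma Gam_mono_iff: "Gam u0 a s \<le> Gam u0 b s \<longleftrightarrow> a \<le> b"
proof (cases a b rule: linorder_cases)
  case less then show ?thesis using Gam_strict[of a b s] by simp
next
  case equal then show ?thesis by simp
next
  case greater then show ?thesis using Gam_strict[of b a s] by simp
qed

lemma Gam_per: "Gam u0 (a+1) s = Gam u0 a s + 1"
  unfolding Gam_def Ff_per[OF sm per0] using Zf0_pos'[OF sm per0, of s] by (simp add: field_simps)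

lemma Gam_int: "Gam u0 (a + of_int n) s = Gam u0 a s + of_int n"
proof -
  have "(\<lambda>a. Gam u0 a s - a) (a + of_int n) = (\<lambda>a. Gam u0 a s - a) a"
    by (rule periodic_int) (simp add: Gam_per)
  then show ?thesis by simp
qed

lemma Gam_ex: "\<exists>a. Gam u0 a s = x"
proof -
  define a0 where "a0 = (of_int \<lfloor>x - Gam u0 0 s\<rfloor> :: real)"
  have g0: "Gam u0 a0 s = Gam u0 0 s + a0" unfolding a0_def using Gam_int[of 0 "\<lfloor>x - Gam u0 0 s\<rfloor>" s] by simp
  have g1: "Gam u0 (a0 + 1) s = Gam u0 0 s + a0 + 1" using g0 Gam_per by simp
  have l: "Gam u0 a0 s \<le> x" using g0 of_int_floor_le[of "x - Gam u0 0 s"] unfolding a0_def by linarith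
  have r: "x \<le> Gam u0 (a0 + 1) s" using g1 frac_lt_1[of "x - Gam u0 0 s"] unfolding a0_def frac_def by linarith
  show ?thesis using IVT[of "\<lambda>a. Gam u0 a s" a0 x "a0 + 1", OF l r] Gam_cont_a by auto
qed

lemma Gam_phi: "Gam u0 (phi u0 x s) s = x"
  unfolding phi_def
proof (rule theI')
  show "\<exists>!a. Gam u0 a s = x" using Gam_ex Gam_strict by (metis linorder_neqE_linordered_idom order_less_irrefl)
qed

lemma phi_Gam: "phi u0 (Gam u0 a s) s = a"
  using Gam_phi[of "Gam u0 a s" s] Gam_strict by (metis linorder_neqE_linordered_idom order_less_irrefl)

lemma phi_per: "phi u0 (x+1) s = phi u0 x s + 1"
  using phi_Gam[of "phi u0 x s + 1" s] Gam_per Gam_phi by simp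

lemma phi_cont: "continuous_on UNIV (\<lambda>p. phi u0 (fst p) (snd p))"
proof (intro continuous_at_imp_continuous_on ballI)
  fix p :: "real \<times> real"
  obtain x t where p: "p = (x,t)" by (cases p)
  define a0 where "a0 = phi u0 x t"
  show "isCont (\<lambda>p. phi u0 (fst p) (snd p)) p"
    unfolding continuous_at_eps_delta
  proof (intro allI impI)
    fix e :: real assume e: "e > 0"
    have gx: "Gam u0 a0 t = x" unfolding a0_def by (rule Gam_phi)
    define gp where "gp = Gam u0 (a0+e) t"
    define gm where "gm = Gam u0 (a0-e) t"
    have gp: "x < gp" unfolding gp_def using Gam_strict[of a0 "a0+e" t] gx e by simp
    have gm: "gm < x" unfolding gm_def using Gam_strict[of "a0-e" a0 t] gx e by simp
    define \<eta> where "\<eta> = min (gp - x) (x - gm) / 2"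
    have \<eta>: "\<eta> > 0" unfolding \<eta>_def using gp gm by simp
    obtain d1 where d1: "d1 > 0" and hd1': "\<forall>s. dist s t < d1 \<longrightarrow> dist (Gam u0 (a0+e) s) (Gam u0 (a0+e) t) < \<eta>"
      using Gam_ds_cont[where a="a0+e" and s=t, unfolded continuous_at_eps_delta, rule_format, OF \<eta>] by (elim exE conjE) 
    have hd1: "dist (Gam u0 (a0+e) s) gp < \<eta>" if "dist s t < d1" for s using hd1' that unfolding gp_def by blast
    obtain d2 where d2: "d2 > 0" and hd2': "\<forall>s. dist s t < d2 \<longrightarrow> dist (Gam u0 (a0-e) s) (Gam u0 (a0-e) t) < \<eta>"
      using Gam_ds_cont[where a="a0-e" and s=t, unfolded continuous_at_eps_delta, rule_format, OF \<eta>] by (elim exE conjE)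
    have hd2: "dist (Gam u0 (a0-e) s) gm < \<eta>" if "dist s t < d2" for s using hd2' that unfolding gm_def by blast
    show "\<exists>d>0. \<forall>p'. dist p' p < d \<longrightarrow> dist (phi u0 (fst p') (snd p')) (phi u0 (fst p) (snd p)) < e"
    proof (intro exI[of _ "min \<eta> (min d1 d2)"] conjI allI impI)
      show "min \<eta> (min d1 d2) > 0" using \<eta> d1 d2 by simp
      fix p' :: "real \<times> real" assume dp: "dist p' p < min \<eta> (min d1 d2)"
      obtain y s where p': "p' = (y,s)" by (cases p')
      have dy: "dist y x < min \<eta> (min d1 d2)" using dist_fst_le[of p' p] dp p p' by simp
      have ds: "dist s t < min \<eta> (min d1 d2)" using dist_snd_le[of p' p] dp p p' by simp
      have e1: "2 * \<eta> \<le> gp - x" "2 * \<eta> \<le> x - gm" unfolding \<eta>_def by auto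
      have a1: "\<bar>Gam u0 (a0+e) s - gp\<bar> < \<eta>" using hd1[of s] ds unfolding dist_real_def by auto
      have a2: "\<bar>Gam u0 (a0-e) s - gm\<bar> < \<eta>" using hd2[of s] ds unfolding dist_real_def by auto
      have a3: "\<bar>y - x\<bar> < \<eta>" using dy unfolding dist_real_def by auto
      have up: "y < Gam u0 (a0+e) s" using a1 a3 e1 unfolding abs_less_iff by (elim conjE) linarith
      have lo: "Gam u0 (a0-e) s < y" using a2 a3 e1 unfolding abs_less_iff by (elim conjE) linarith
      define b where "b = phi u0 y s"
      have gb: "Gam u0 b s = y" unfolding b_def by (rule Gam_phi)
      have "b < a0 + e" using up gb Gam_mono_iff[of "a0+e" s b] by linarith
      moreover have "a0 - e < b" using lo gb Gam_mono_iff[of b s "a0-e"] by linarith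
      ultimately show "dist (phi u0 (fst p') (snd p')) (phi u0 (fst p) (snd p)) < e"
        using p p' unfolding b_def a0_def dist_real_def by auto
    qed
  qed
qed

end


context
  fixes u0 :: "real \<Rightarrow> real"
  assumes sm: "smooth1 u0" and per0: "\<forall>x. u0 (x + 1) = u0 x"
begin

lemma Psi_cont: "continuous_on UNIV (\<lambda>p. (phi u0 (fst p) (snd p), snd p))"
  by (intro continuous_on_Pair phi_cont[OF sm per0] continuous_intros)

lemma Psi_deriv:
  "((\<lambda>p. (phi u0 (fst p) (snd p), snd p)) has_derivative
     (\<lambda>h. (Rf u0 (phi u0 x t) t * (fst h - Gam_t u0 (phi u0 x t) t * snd h), snd h))) (at (x,t))"
proof -
  define a where "a = phi u0 x t"
  define f where "f q = (Gam u0 (fst q) (snd q), snd q)" for q :: "real \<times> real"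
  define g where "g p = (phi u0 (fst p) (snd p), snd p)" for p :: "real \<times> real"
  define f' where "f' h = (Gam_a u0 a t * fst h + Gam_t u0 a t * snd h, snd h)" for h :: "real \<times> real"
  define g' where "g' h = (Rf u0 a t * (fst h - Gam_t u0 a t * snd h), snd h)" for h :: "real \<times> real"
  have fd: "(f has_derivative f') (at (a,t))"
    unfolding f_def f'_def
    using HD_Gam[OF sm per0] unfolding HD_def
    by (intro has_derivative_Pair) (auto intro!: has_derivative_snd has_derivative_ident)
  have gd: "(g has_derivative g') (at (f (a,t)))"
  proof (rule has_derivative_inverse_basic_x[OF fd, of g' g UNIV])
    show "bounded_linear g'" unfolding g'_def by (intro bounded_linear_intros)
    show "g' \<circ> f' = id"
      using Rf_Gam_a[OF sm per0, of a t] by (auto simp: g'_def f'_def fun_eq_iff algebra_simps)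
    show "continuous (at (f (a, t))) g"
      using continuous_on_interior[OF Psi_cont, of "f (a,t)"] unfolding g_def[abs_def] by simp
    show "g (f (a, t)) = (a, t)" by (simp add: f_def g_def phi_Gam[OF sm per0])
    show "\<And>y. y \<in> UNIV \<Longrightarrow> f (g y) = y" by (simp add: f_def g_def Gam_phi[OF sm per0])
  qed auto
  moreover have "f (a,t) = (x,t)" by (simp add: f_def a_def Gam_phi[OF sm per0])
  ultimately show ?thesis unfolding g_def[abs_def] g'_def a_def by simp
qed

lemma U_deriv:
  assumes "HD G Ga Gt"
  shows "((\<lambda>p. G (phi u0 (fst p) (snd p)) (snd p)) has_derivative
     (\<lambda>h. Ga (phi u0 x t) t * (Rf u0 (phi u0 x t) t * (fst h - Gam_t u0 (phi u0 x t) t * snd h)) + Gt (phi u0 x t) t * snd h)) (at (x,t))"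
proof -
  have G: "((\<lambda>q. G (fst q) (snd q)) has_derivative (\<lambda>q. Ga (phi u0 x t) t * fst q + Gt (phi u0 x t) t * snd q))
      (at ((\<lambda>p. (phi u0 (fst p) (snd p), snd p)) (x,t)))"
    using assms unfolding HD_def by simp
  show ?thesis using has_derivative_compose[OF Psi_deriv G] by simp
qed

lemma U_dx:
  assumes "HD G Ga Gt"
  shows "((\<lambda>y. G (phi u0 y t) t) has_real_derivative Ga (phi u0 x t) t * Rf u0 (phi u0 x t) t) (at x)"
proof -
  have P: "((\<lambda>y. (y, t)) has_derivative (\<lambda>h. (h, 0))) (at x)"
    by (intro has_derivative_Pair has_derivative_ident has_derivative_const)
  have U: "((\<lambda>p. G (phi u0 (fst p) (snd p)) (snd p)) has_derivative
     (\<lambda>h. Ga (phi u0 x t) t * (Rf u0 (phi u0 x t) t * (fst h - Gam_t u0 (phi u0 x t) t * snd h)) + Gt (phi u0 x t) t * snd h)) (at ((\<lambda>y. (y,t)) x))"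
    using U_deriv[OF assms] by simp
  show ?thesis unfolding has_field_derivative_def
    using has_derivative_compose[OF P U]
    by (simp add: has_derivative_eq_rhs fun_eq_iff algebra_simps)
qed

lemma U_dt:
  assumes "HD G Ga Gt"
  shows "((\<lambda>s. G (phi u0 x s) s) has_real_derivative
           Gt (phi u0 x t) t - Ga (phi u0 x t) t * Rf u0 (phi u0 x t) t * Gam_t u0 (phi u0 x t) t) (at t)"
proof -
  have P: "((\<lambda>s. (x, s)) has_derivative (\<lambda>h. (0, h))) (at t)"
    by (intro has_derivative_Pair has_derivative_ident has_derivative_const)
  have U: "((\<lambda>p. G (phi u0 (fst p) (snd p)) (snd p)) has_derivative
     (\<lambda>h. Ga (phi u0 x t) t * (Rf u0 (phi u0 x t) t * (fst h - Gam_t u0 (phi u0 x t) t * snd h)) + Gt (phi u0 x t) t * snd h)) (at ((\<lambda>s. (x,s)) t))"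
    using U_deriv[OF assms] by simp
  show ?thesis unfolding has_field_derivative_def
    using has_derivative_compose[OF P U]
    by (simp add: has_derivative_eq_rhs fun_eq_iff algebra_simps)
qed

lemma U_cont:
  assumes "HD G Ga Gt"
  shows "continuous_on UNIV (\<lambda>p. G (phi u0 (fst p) (snd p)) (snd p))"
proof -
  have "continuous_on UNIV ((\<lambda>q. G (fst q) (snd q)) \<circ> (\<lambda>p. (phi u0 (fst p) (snd p), snd p)))"
    by (rule continuous_on_compose[OF Psi_cont]) (rule continuous_on_subset[OF HD_cont[OF assms]], simp)
  then show ?thesis by (simp add: o_def)
qed

end


definition uu :: "(real \<Rightarrow> real) \<Rightarrow> real \<Rightarrow> real \<Rightarrow> real" where
  "uu u0 x t = Gam_t u0 (phi u0 x t) t"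

lemma within_nontriv: "0 < (T::real) \<Longrightarrow> 0 \<le> t \<Longrightarrow> t < T \<Longrightarrow> at t within {0..<T} \<noteq> bot"
  using trivial_limit_within[of t "{0..<T::real}"] islimpt_Ico[of 0 T t] by (auto simp: trivial_limit_def)

lemma pdt_transfer:
  fixes f :: "real \<Rightarrow> real \<Rightarrow> real"
  assumes T: "0 < T" "0 \<le> t" "t < T"
    and eq: "\<And>s. 0 \<le> s \<Longrightarrow> s < T \<Longrightarrow> f x s = g s"
    and d: "(g has_real_derivative D) (at t)"
  shows "((\<lambda>s. f x s) has_real_derivative D) (at t within {0..<T})" and "pdt T f x t = D"
proof -
  have "(g has_real_derivative D) (at t within {0..<T})" using d by (rule has_field_derivative_at_within)
  then show fd: "((\<lambda>s. f x s) has_real_derivative D) (at t within {0..<T})"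
    by (rule has_field_derivative_transform_within[of _ _ _ _ 1]) (use T eq in auto)
  show "pdt T f x t = D" unfolding pdt_def
    by (rule vector_derivative_within[OF within_nontriv[OF T]])
       (use fd in \<open>simp add: has_real_derivative_iff_has_vector_derivative\<close>)
qed

context
  fixes u0 :: "real \<Rightarrow> real" and T :: real
  assumes sm: "smooth1 u0" and per0: "\<forall>x. u0 (x + 1) = u0 x" and T: "0 < T"
begin

lemma pd_repr: "\<exists>G\<in>S2 u0. \<forall>x t. 0 \<le> t \<longrightarrow> t < T \<longrightarrow> pd T ds (uu u0) x t = G (phi u0 x t) t"
proof (induction ds)
  case Nil
  show ?case by (rule bexI[of _ "Gam_t u0"]) (auto simp: uu_def S2_Gam_t[OF sm per0])
next
  case (Cons b ds)
  then obtain G where G: "G \<in> S2 u0" and hG: "\<And>x t. 0 \<le> t \<Longrightarrow> t < T \<Longrightarrow> pd T ds (uu u0) x t = G (phi u0 x t) t"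
    by blast
  obtain Ga Gt where Ga: "Ga \<in> S2 u0" and Gt: "Gt \<in> S2 u0" and HG: "HD G Ga Gt"
    using S2_HD[OF sm per0 G] by blast
  show ?case
  proof (cases b)
    case True
    have mem: "(\<lambda>a s. Ga a s * Rf u0 a s) \<in> S2 u0" by (rule S2.mult[OF Ga S2_Rf[OF sm per0]])
    have eq: "pdx (pd T ds (uu u0)) x t = Ga (phi u0 x t) t * Rf u0 (phi u0 x t) t"
      if that: "0 \<le> t" "t < T" for x t
    proof -
      have eqf: "(\<lambda>y. pd T ds (uu u0) y t) = (\<lambda>y. G (phi u0 y t) t)" using hG that by auto
      have "deriv (\<lambda>y. pd T ds (uu u0) y t) x = Ga (phi u0 x t) t * Rf u0 (phi u0 x t) t"
        unfolding eqf by (rule DERIV_imp_deriv[OF U_dx[OF sm per0 HG]])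
      then show ?thesis by (simp add: pdx_def)
    qed
    show ?thesis by (rule bexI[OF _ mem]) (simp add: eq True)
  next
    case False
    have mem: "(\<lambda>a s. Gt a s - Ga a s * Rf u0 a s * Gam_t u0 a s) \<in> S2 u0"
      by (intro S2_diff S2.mult Ga Gt S2_Rf[OF sm per0] S2_Gam_t[OF sm per0])
    have eq: "pdt T (pd T ds (uu u0)) x t = Gt (phi u0 x t) t - Ga (phi u0 x t) t * Rf u0 (phi u0 x t) t * Gam_t u0 (phi u0 x t) t"
      if that: "0 \<le> t" "t < T" for x t
    proof -
      have "pdt T (pd T ds (uu u0)) x t = Gt (phi u0 x t) t - Ga (phi u0 x t) t * Rf u0 (phi u0 x t) t * Gam_t u0 (phi u0 x t) t"
      proof (rule pdt_transfer(2)[OF T that])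
        show "\<And>s. 0 \<le> s \<Longrightarrow> s < T \<Longrightarrow> pd T ds (uu u0) x s = G (phi u0 x s) s" by (rule hG)
        show "((\<lambda>s. G (phi u0 x s) s) has_real_derivative Gt (phi u0 x t) t - Ga (phi u0 x t) t * Rf u0 (phi u0 x t) t * Gam_t u0 (phi u0 x t) t) (at t)"
          by (rule U_dt[OF sm per0 HG])
      qed
      then show ?thesis by simp
    qed
    show ?thesis by (rule bexI[OF _ mem]) (simp add: eq False)
  qed
qed

lemma smooth_uu: "smooth_on_strip T (uu u0)"
  unfolding smooth_on_strip_def
proof (intro allI conjI impI)
  fix ds
  obtain G where G: "G \<in> S2 u0" and hG: "\<And>x t. 0 \<le> t \<Longrightarrow> t < T \<Longrightarrow> pd T ds (uu u0) x t = G (phi u0 x t) t"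
    using pd_repr by blast
  obtain Ga Gt where HG: "HD G Ga Gt" using S2_HD[OF sm per0 G] by blast
  show "continuous_on (UNIV \<times> {0..<T}) (\<lambda>p. pd T ds (uu u0) (fst p) (snd p))"
  proof -
    have "continuous_on (UNIV \<times> {0..<T}) (\<lambda>p. G (phi u0 (fst p) (snd p)) (snd p))"
      by (rule continuous_on_subset[OF U_cont[OF sm per0 HG]]) simp
    then show ?thesis by (rule continuous_on_eq) (auto simp: hG)
  qed
  fix x t :: real assume t: "0 \<le> t \<and> t < T"
  have "(\<lambda>y. pd T ds (uu u0) y t) = (\<lambda>y. G (phi u0 y t) t)" using hG t by auto
  then show "(\<lambda>y. pd T ds (uu u0) y t) differentiable at x"
    using U_dx[OF sm per0 HG, of t x] by (auto simp: real_differentiable_def)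
  show "(\<lambda>s. pd T ds (uu u0) x s) differentiable at t within {0..<T}"
    using pdt_transfer(1)[OF T, of t "pd T ds (uu u0)" x "\<lambda>s. G (phi u0 x s) s", OF _ _ hG U_dt[OF sm per0 HG]] t
    by (auto simp: real_differentiable_def)
qed

lemma Gam_0: "Gam u0 a 0 = a"
proof -
  have Z: "Zf u0 0 0 = 1" by (simp add: Zf_def)
  have "Ff u0 0 a 0 = a - 0" unfolding Ff_def
    by (rule ii_FTC) (auto intro!: derivative_eq_intros continuous_intros)
  then show ?thesis by (simp add: Gam_def Z)
qed

lemma phi_0: "phi u0 x 0 = x"
  using phi_Gam[OF sm per0, of x 0] Gam_0 by simp

lemma uu_init: "uu u0 x 0 = u0 x"
proof -
  have Z: "Zf u0 0 0 = 1" by (simp add: Zf_def)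
  have F0: "Ff u0 0 x 0 = x - 0" unfolding Ff_def
    by (rule ii_FTC) (auto intro!: derivative_eq_intros continuous_intros)
  have F1: "Ff u0 (Suc 0) x 0 = u0 x - u0 0" unfolding Ff_def
    by (rule ii_FTC) (auto intro!: continuous_intros D1_cont_intro[OF sm per0] u0_deriv[OF sm per0])
  have Z1: "Zf u0 (Suc 0) 0 = 0" using Zf1_0[OF sm per0] by simp
  show ?thesis by (simp add: uu_def phi_0 Gam_t_def Z F0 F1 Z1)
qed

lemma uu_per: "uu u0 (x + 1) t = uu u0 x t"
proof -
  have Z: "0 < Zf u0 0 t" by (rule Zf0_pos'[OF sm per0])
  have alg: "c + (F1 + Z1) / Z0 - (F0 + Z0) * Z1 / Z0^2 = c + F1 / Z0 - F0 * Z1 / Z0^2"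
    if "0 < Z0" for c F1 Z1 Z0 F0 :: real
    using that by (simp add: field_simps power2_eq_square)
  have g: "Gam_t u0 (a + 1) t = Gam_t u0 a t" for a
    unfolding Gam_t_def Ff_per[OF sm per0] by (rule alg[OF Z])
  have "uu u0 (x + 1) t = Gam_t u0 (phi u0 x t + 1) t" unfolding uu_def phi_per[OF sm per0] ..
  also have "\<dots> = uu u0 x t" unfolding uu_def by (rule g)
  finally show ?thesis .
qed

end


lemma HD_da: "HD G Ga Gt \<Longrightarrow> ((\<lambda>a. G a s) has_real_derivative Ga a s) (at a)"
proof -
  assume H: "HD G Ga Gt"
  have P: "((\<lambda>a. (a, s)) has_derivative (\<lambda>h. (h, 0))) (at a)"
    by (intro has_derivative_Pair has_derivative_ident has_derivative_const)
  have G: "((\<lambda>p. G (fst p) (snd p)) has_derivative (\<lambda>p. Ga a s * fst p + Gt a s * snd p)) (at ((\<lambda>a. (a,s)) a))"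
    using H unfolding HD_def by simp
  show ?thesis unfolding has_field_derivative_def
    using has_derivative_compose[OF P G] by (simp add: has_derivative_eq_rhs fun_eq_iff algebra_simps)
qed

definition UX :: "(real \<Rightarrow> real) \<Rightarrow> real \<Rightarrow> real \<Rightarrow> real" where
  "UX u0 x t = deriv u0 (phi u0 x t) - Zf u0 1 t * (1 / Zf u0 0 t)"

context
  fixes u0 :: "real \<Rightarrow> real"
  assumes sm: "smooth1 u0" and per0: "\<forall>x. u0 (x + 1) = u0 x"
begin

lemma Gam_t_da: "((\<lambda>a. Gam_t u0 a s) has_real_derivative
   deriv u0 a * exp (s * deriv u0 a) / Zf u0 0 s - exp (s * deriv u0 a) * Zf u0 1 s / (Zf u0 0 s)^2) (at a)"
  unfolding Gam_t_def
  using Ff_da[OF sm per0, of 1 s a] Ff_da[OF sm per0, of 0 s a] Zf0_pos'[OF sm per0, of s]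
  by (auto intro!: derivative_eq_intros simp: field_simps power2_eq_square)

lemma pdx_uu: "pdx (uu u0) x t = UX u0 x t"
proof -
  obtain Ga Gt where HG: "HD (Gam_t u0) Ga Gt" using S2_HD[OF sm per0 S2_Gam_t[OF sm per0]] by blast
  have "Ga a s = deriv u0 a * exp (s * deriv u0 a) / Zf u0 0 s - exp (s * deriv u0 a) * Zf u0 1 s / (Zf u0 0 s)^2" for a s
    using DERIV_unique[OF HD_da[OF HG] Gam_t_da] .
  moreover have "(\<lambda>y. uu u0 y t) = (\<lambda>y. Gam_t u0 (phi u0 y t) t)" by (simp add: uu_def fun_eq_iff)
  ultimately have "pdx (uu u0) x t = (deriv u0 (phi u0 x t) * exp (t * deriv u0 (phi u0 x t)) / Zf u0 0 t
        - exp (t * deriv u0 (phi u0 x t)) * Zf u0 1 t / (Zf u0 0 t)^2) * Rf u0 (phi u0 x t) t"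
    using U_dx[OF sm per0 HG, of t x] by (simp add: pdx_def DERIV_imp_deriv)
  also have "\<dots> = UX u0 x t"
    using Zf0_pos'[OF sm per0, of t]
    by (simp add: UX_def Rf_def field_simps power2_eq_square exp_minus)
  finally show ?thesis .
qed

lemma HD_UXg: "HD (\<lambda>a s. deriv u0 a - Zf u0 1 s * (1 / Zf u0 0 s)) (\<lambda>a s. deriv (deriv u0) a)
   (\<lambda>a s. - (Zf u0 2 s / Zf u0 0 s - (Zf u0 1 s / Zf u0 0 s)^2))"
proof (rule HD_joint)
  fix a s :: real
  show "((\<lambda>a. deriv u0 a - Zf u0 1 s * (1 / Zf u0 0 s)) has_real_derivative deriv (deriv u0) a) (at a)"
    using D1_deriv[OF sm per0, of a] by (auto intro!: derivative_eq_intros)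
  have "((\<lambda>s. deriv u0 a - Zf u0 1 s * (1 / Zf u0 0 s)) has_real_derivative
      0 - (Zf u0 (Suc 1) s * (1 / Zf u0 0 s) + Zf u0 1 s * (- (Zf u0 (Suc 0) s) / (Zf u0 0 s)^2))) (at s)"
    using Zf_deriv[OF sm per0, where k=1 and t=s] Zf_deriv[OF sm per0, where k=0 and t=s] Zf0_pos'[OF sm per0, of s]
    by (auto intro!: derivative_eq_intros simp: power2_eq_square field_simps)
  then show "((\<lambda>s. deriv u0 a - Zf u0 1 s * (1 / Zf u0 0 s)) has_real_derivative
      - (Zf u0 2 s / Zf u0 0 s - (Zf u0 1 s / Zf u0 0 s)^2)) (at s)"
    by (simp add: numeral_2_eq_2 power2_eq_square field_simps)
next
  show "continuous_on UNIV (\<lambda>p. deriv (deriv u0) (fst p))"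
    by (intro D2_cont_intro[OF sm per0] continuous_intros)
qed

end


context
  fixes u0 :: "real \<Rightarrow> real"
  assumes sm: "smooth1 u0" and per0: "\<forall>x. u0 (x + 1) = u0 x"
begin

lemma UX_eq: "UX u0 = (\<lambda>y t. (\<lambda>a s. deriv u0 a - Zf u0 1 s * (1 / Zf u0 0 s)) (phi u0 y t) t)"
  by (simp add: UX_def fun_eq_iff)

lemma pdx_uu_fun: "pdx (uu u0) = UX u0"
  using pdx_uu[OF sm per0] by (auto simp: fun_eq_iff)

lemma pdxx_uu: "pdx (pdx (uu u0)) x t = deriv (deriv u0) (phi u0 x t) * Rf u0 (phi u0 x t) t"
proof -
  have "(\<lambda>y. UX u0 y t) = (\<lambda>y. (\<lambda>a s. deriv u0 a - Zf u0 1 s * (1 / Zf u0 0 s)) (phi u0 y t) t)"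
    by (simp add: UX_def fun_eq_iff)
  then show ?thesis
    using U_dx[OF sm per0 HD_UXg[OF sm per0], of t x] unfolding pdx_uu_fun
    by (simp add: pdx_def DERIV_imp_deriv)
qed

lemma pdtx_uu:
  assumes T: "0 < T" "0 \<le> t" "t < T"
  shows "pdt T (pdx (uu u0)) x t = - (Zf u0 2 t / Zf u0 0 t - (Zf u0 1 t / Zf u0 0 t)^2)
           - deriv (deriv u0) (phi u0 x t) * Rf u0 (phi u0 x t) t * Gam_t u0 (phi u0 x t) t"
  unfolding pdx_uu_fun
  by (rule pdt_transfer(2)[OF T, of "UX u0" x "\<lambda>s. (\<lambda>a s. deriv u0 a - Zf u0 1 s * (1 / Zf u0 0 s)) (phi u0 x s) s"])
     (use U_dt[OF sm per0 HD_UXg[OF sm per0], of x t] in \<open>auto simp: UX_def\<close>)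

lemma phi_dy: "((\<lambda>y. phi u0 y t) has_real_derivative Rf u0 (phi u0 y t) t) (at y)"
proof -
  have H: "HD (\<lambda>a s. a) (\<lambda>a s. 1) (\<lambda>a s. 0)" by (rule HD_afun) (rule DERIV_ident)
  show ?thesis using U_dx[OF sm per0 H, of t y] by simp
qed

lemma integral_UX: "integral {0..1} (\<lambda>y. (UX u0 y t)^2) = Zf u0 2 t / Zf u0 0 t - (Zf u0 1 t / Zf u0 0 t)^2"
proof -
  have Z: "0 < Zf u0 0 t" by (rule Zf0_pos'[OF sm per0])
  define \<rho> where "\<rho> = Zf u0 1 t / Zf u0 0 t"
  define h where "h b = (deriv u0 b - \<rho>)^2 * (exp (t * deriv u0 b) * (1 / Zf u0 0 t))" for b
  have hc: "continuous_on UNIV h" unfolding h_def[abs_def]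
    by (intro continuous_intros D1_cont_intro[OF sm per0])
  have hper: "h (b+1) = h b" for b unfolding h_def by (simp add: D1_per[OF sm per0])
  define A where "A a = ii 0 a h" for a
  have dA: "(A has_real_derivative h a) (at a)" for a unfolding A_def[abs_def] by (rule ii_deriv[OF hc])
  have UXr: "UX u0 y t = deriv u0 (phi u0 y t) - \<rho>" for y by (simp add: UX_def \<rho>_def)
  have dAphi: "((\<lambda>y. A (phi u0 y t)) has_real_derivative (UX u0 y t)^2) (at y)" for y
  proof -
    have "((\<lambda>y. A (phi u0 y t)) has_real_derivative h (phi u0 y t) * Rf u0 (phi u0 y t) t) (at y)"
      by (rule DERIV_chain2[OF dA phi_dy])
    moreover have "h (phi u0 y t) * Rf u0 (phi u0 y t) t = (UX u0 y t)^2"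
      unfolding h_def Rf_def UXr using Z by (simp add: exp_minus field_simps)
    ultimately show ?thesis by simp
  qed
  have "((\<lambda>y. (UX u0 y t)^2) has_integral (A (phi u0 1 t) - A (phi u0 0 t))) {0..1}"
    by (rule fundamental_theorem_of_calculus)
       (auto simp: has_real_derivative_iff_has_vector_derivative[symmetric]
             intro!: has_field_derivative_at_within dAphi)
  moreover have "phi u0 1 t = phi u0 0 t + 1" using phi_per[OF sm per0, of 0 t] by simp
  moreover have "A (a + 1) - A a = integral {0..1} h" for a
    using ii_add[of 0 a h "a+1"] ii_periodic[OF hc hper, of a] unfolding A_def by linarith
  ultimately have I: "integral {0..1} (\<lambda>y. (UX u0 y t)^2) = integral {0..1} h"
    by (simp add: integral_unique)
  have iZ: "((\<lambda>b. deriv u0 b ^ k * exp (t * deriv u0 b)) has_integral Zf u0 k t) {0..1}" for k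
    unfolding Zf_def
    by (rule integrable_integral, rule integrable_continuous_interval)
       (intro continuous_intros D1_cont_intro[OF sm per0])
  have "((\<lambda>b. (1 / Zf u0 0 t) * (deriv u0 b ^ 2 * exp (t * deriv u0 b))
              - (2 * \<rho> / Zf u0 0 t) * (deriv u0 b ^ 1 * exp (t * deriv u0 b))
              + (\<rho>^2 / Zf u0 0 t) * (deriv u0 b ^ 0 * exp (t * deriv u0 b))) has_integral
        ((1 / Zf u0 0 t) * Zf u0 2 t - (2 * \<rho> / Zf u0 0 t) * Zf u0 1 t + (\<rho>^2 / Zf u0 0 t) * Zf u0 0 t)) {0..1}"
    by (intro has_integral_add has_integral_diff has_integral_mult_right iZ)
  moreover have "(\<lambda>b. (1 / Zf u0 0 t) * (deriv u0 b ^ 2 * exp (t * deriv u0 b))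
              - (2 * \<rho> / Zf u0 0 t) * (deriv u0 b ^ 1 * exp (t * deriv u0 b))
              + (\<rho>^2 / Zf u0 0 t) * (deriv u0 b ^ 0 * exp (t * deriv u0 b))) = h"
    unfolding h_def using Z by (auto simp: fun_eq_iff power2_eq_square field_simps)
  moreover have "(1 / Zf u0 0 t) * Zf u0 2 t - (2 * \<rho> / Zf u0 0 t) * Zf u0 1 t + (\<rho>^2 / Zf u0 0 t) * Zf u0 0 t
      = Zf u0 2 t / Zf u0 0 t - (Zf u0 1 t / Zf u0 0 t)^2"
    unfolding \<rho>_def using Z by (simp add: power2_eq_square field_simps)
  ultimately have "integral {0..1} h = Zf u0 2 t / Zf u0 0 t - (Zf u0 1 t / Zf u0 0 t)^2"
    by (simp add: integral_unique)
  then show ?thesis using I by simp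
qed

lemma uu_solution:
  assumes T: "0 < T"
  shows "is_solution u0 T (uu u0)"
  unfolding is_solution_def
proof (intro conjI allI impI)
  show "smooth_on_strip T (uu u0)" by (rule smooth_uu[OF sm per0 T])
  show "uu u0 x 0 = u0 x" for x by (rule uu_init[OF sm per0 T])
  show "uu u0 (x + 1) t = uu u0 x t" for x t by (rule uu_per[OF sm per0 T])
  fix x t :: real assume t: "0 \<le> t \<and> t < T"
  have "(\<lambda>y. (pd T [True] (uu u0) y t)\<^sup>2) = (\<lambda>y. (UX u0 y t)^2)"
    by (simp add: pdx_uu_fun)
  then have I: "integral {0..1} (\<lambda>y. (pd T [True] (uu u0) y t)\<^sup>2) = Zf u0 2 t / Zf u0 0 t - (Zf u0 1 t / Zf u0 0 t)^2"
    using integral_UX by simp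
  have "pd T [False, True] (uu u0) x t + uu u0 x t * pd T [True, True] (uu u0) x t
      = pdt T (pdx (uu u0)) x t + uu u0 x t * pdx (pdx (uu u0)) x t" by simp
  also have "\<dots> = - (Zf u0 2 t / Zf u0 0 t - (Zf u0 1 t / Zf u0 0 t)^2)"
    using t by (simp add: pdtx_uu[OF T] pdxx_uu uu_def algebra_simps)
  finally show "pd T [False, True] (uu u0) x t + uu u0 x t * pd T [True, True] (uu u0) x t
      = - integral {0..1} (\<lambda>y. (pd T [True] (uu u0) y t)\<^sup>2)" using I by simp
qed

lemma existence: "\<exists>u. \<forall>T > 0. is_solution u0 T u"
  using uu_solution by blast

end


theorem mainTheorem9:
  fixes u0 :: "real \<Rightarrow> real"
  assumes "smooth1 u0"
    and "\<forall>x. u0 (x + 1) = u0 x"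
  shows "(\<forall>T > 0. \<forall>u \<gamma>. is_solution u0 T u \<and> is_characteristic T u \<gamma> \<longrightarrow>
           (\<forall>\<alpha> t. 0 \<le> t \<and> t < T \<longrightarrow>
              ((\<lambda>a. \<gamma> a t) has_real_derivative
                  exp (t * deriv u0 \<alpha>) / integral {0..1} (\<lambda>\<beta>. exp (t * deriv u0 \<beta>))) (at \<alpha>)
            \<and> pd T [True] u (\<gamma> \<alpha> t) t
                = deriv u0 \<alpha> - integral {0..1} (\<lambda>\<beta>. deriv u0 \<beta> * exp (t * deriv u0 \<beta>))
                                / integral {0..1} (\<lambda>\<beta>. exp (t * deriv u0 \<beta>))
            \<and> 0 \<le> deriv u0 \<alpha> - pd T [True] u (\<gamma> \<alpha> t) t
            \<and> deriv u0 \<alpha> - pd T [True] u (\<gamma> \<alpha> t) t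
                \<le> integral {0..1} (\<lambda>\<beta>. deriv u0 \<beta> * exp (t * deriv u0 \<beta>))))
       \<and> (\<exists>u. \<forall>T > 0. is_solution u0 T u)"
  proof (intro conjI allI impI)
  fix T :: real and u \<gamma> :: "real \<Rightarrow> real \<Rightarrow> real" and \<alpha> t :: real
  assume T: "T > 0" and uc: "is_solution u0 T u \<and> is_characteristic T u \<gamma>" and t: "0 \<le> t \<and> t < T"
  define t1 where "t1 = (t + T) / 2"
  have t1: "0 \<le> t1" "t1 < T" "t < t1" using t unfolding t1_def by auto
  from uc have sol: "is_solution u0 T u" and ch: "is_characteristic T u \<gamma>" by auto
  note m = main1[OF assms(1) assms(2) sol ch t1(1) t1(2), of t \<alpha>]
  show "((\<lambda>a. \<gamma> a t) has_real_derivative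
                  exp (t * deriv u0 \<alpha>) / integral {0..1} (\<lambda>\<beta>. exp (t * deriv u0 \<beta>))) (at \<alpha>)"
    using m t t1 by blast
  show "pd T [True] u (\<gamma> \<alpha> t) t
                = deriv u0 \<alpha> - integral {0..1} (\<lambda>\<beta>. deriv u0 \<beta> * exp (t * deriv u0 \<beta>))
                                / integral {0..1} (\<lambda>\<beta>. exp (t * deriv u0 \<beta>))"
    using m t t1 by blast
  show "0 \<le> deriv u0 \<alpha> - pd T [True] u (\<gamma> \<alpha> t) t" using m t t1 by blast
  show "deriv u0 \<alpha> - pd T [True] u (\<gamma> \<alpha> t) t
                \<le> integral {0..1} (\<lambda>\<beta>. deriv u0 \<beta> * exp (t * deriv u0 \<beta>))" using m t t1 by blast
next
  show "\<exists>u. \<forall>T > 0. is_solution u0 T u" by (rule existence[OF assms(1) assms(2)])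
qed

end
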